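(* Let $m\in\mathbb{N}$ and let $\mathbb{R}^m$ be equipped with a norm $\|\cdot\|$. For $i=1,\ldots,m$, let $n_i\in\mathbb{N}$, $\beta_i>0$, $\underline{\kappa}_i\in\mathbb{R}$, and let $\kappa_{i,j}:=\underline{\kappa}_i+j\beta_i$ for $j=0,\ldots,n_i$. Moreover, for $i=1,\ldots,m$, let $\mathcal{I}_i:=\big\{[\kappa_{i,0},\kappa_{i,1}],\ldots,[\kappa_{i,n_i-1},\kappa_{i,n_i}]\big\}$, let $\overline{\mathcal{I}}_i:=\mathcal{I}_i \cup \big\{(-\infty,\kappa_{i,0}],[\kappa_{i,n_i},\infty)\big\}$, and define \begin{align*} \mathfrak{C}_0&:=\big\{I_1\times\cdots\times I_m : I_i\in\mathcal{I}_i\;\forall 1\le i\le m\big\},\\ \mathfrak{C}&:=\big\{I_1\times\cdots\times I_m : I_i\in\overline{\mathcal{I}}_i\;\forall 1\le i\le m\big\},\\ \mathcal{G}_0&:=\Big\{\mathbb{R}^m\ni(x_1,\ldots,x_m)^\top\mapsto \Big(\max_{i\in L}\big\{\beta_i^{-1}(x_i-\kappa_{i,j_i})^+\big\}\Big)^+\in\mathbb{R} : 0\le j_i\le n_i\;\forall i\in L,\; L\subseteq\{1,\ldots,m\}\Big\},\\ \mathcal{G}_1&:=\mathcal{G}_0 \cup \big\{\mathbb{R}^m\ni(x_1,\ldots,x_m)^\top\mapsto x_i\in\mathbb{R}:1\le i\le m\big\},\\ \mathcal{G}_p&:=\mathcal{G}_0 \cup \big\{\mathbb{R}^m\ni(x_1,\ldots,x_m)^\top\mapsto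 \big((\kappa_{i,0}-x_i)^+\big)^p\in\mathbb{R}:1\le i\le m\big\}\\ &\phantom{:=\;\mathcal{G}_0}\cup \big\{\mathbb{R}^m\ni(x_1,\ldots,x_m)^\top\mapsto \big((x_i-\kappa_{i,n_i})^+\big)^p\in\mathbb{R}:1\le i\le m\big\}\qquad\forall p\in(1,\infty). \end{align*} Then, the following statements hold. (i) $\mathfrak{C}_0$ is a polyhedral cover of $[\kappa_{1,0},\kappa_{1,n_1}]\times\cdots\times[\kappa_{m,0},\kappa_{m,n_m}]$ (and so also of any $\mathcal{Y}\subseteq [\kappa_{1,0},\kappa_{1,n_1}]\times\cdots\times[\kappa_{m,0},\kappa_{m,n_m}]$) and $\mathcal{G}_0$ is an interpolation function set for $\mathfrak{C}_0$. (ii) $\mathfrak{C}$ is a polyhedral cover of $\mathbb{R}^m$ (and so also of any $\mathcal{Y}\subseteq\mathbb{R}^m$) and for all $p\in[1,\infty)$, $\mathcal{G}_p$ is a $p$-interpolation function set for $\mathfrak{C}$.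
   Context: Definitions used. For a set $\mathcal{G}$ of real-valued functions, $\mathrm{span}_1(\mathcal{G})$ denotes the set of finite linear combinations of functions in $\mathcal{G}$ plus a constant intercept, i.e. $\{y_0+\sum_{j=1}^k y_j g_j: k\in\mathbb{N}_0,\ y_0,\ldots,y_k\in\mathbb{R},\ g_1,\ldots,g_k\in\mathcal{G}\}$. Faces/extreme points/extreme directions are in the sense of Rockafellar: a convex subset $C'$ of a convex set $C$ is a face if whenever $\lambda x_1+(1-\lambda)x_2\in C'$ with $0<\lambda<1$, $x_1,x_2\in C$, then $x_1,x_2\in C'$; an extreme point is a point that is a face; $z$ is an extreme direction of $C$ if $\{x+\lambda z:\lambda\ge0\}$ is a face of $C$ for some $x\in C$. Polyhedral cover: for $\mathcal{Y}\subseteq\mathbb{R}^m$, a collection $\mathfrak{C}$ of subsets of $\mathbb{R}^m$ is a polyhedral cover of $\mathcal{Y}$ if (a) $|\mathfrak{C}|<\infty$ and every $C\in\mathfrak{C}$ is a polyhedron with at least one extreme point; (b) $\bigcup_{C\in\mathfrak{C}}C\supseteq\mathcal{Y}$; (c) if $C_1,C_2\in\mathfrak{C}$ and $C_1\cap C_2\neq\emptyset$ then $C_1\cap C_2$ is a face of both. It is bounded if every $C$ is bounded. $V(C)$, $D(C)$ denote the sets of extreme points and extreme directions of $C$; $\mathfrak{F}(\mathfrak{C})$ is the set of non-empty faces of members of $\mathfrak{C}$; $V(\mathfrak{C})=\bigcup_{C}V(C)$, $D(\mathfrak{C})=\bigcup_C D(C)$. Vertex interpolation function set for $\mathfrak{C}$: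 functions $\{g_v:\bigcup_{C\in\mathfrak{C}}C\to\mathbb{R} : v\in V(\mathfrak{C})\}$ such that (VIF1) $g_v\ge0$; (VIF2) $g_v(v')=\mathbf{1}_{\{v=v'\}}$ for $v,v'\in V(\mathfrak{C})$; (VIF3) for every $F\in\mathfrak{F}(\mathfrak{C})$ and $x\in F$, $\sum_{v\in V(F)}g_v(x)=1$; (VIF4) for every $F\in\mathfrak{F}(\mathfrak{C})$, $x\in F$ and $v\in V(\mathfrak{C})\setminus V(F)$, $g_v(x)=0$. $p$-radial function set (for unbounded $\mathfrak{C}$): functions $\{\overline{g}_u : u\in D(\mathfrak{C})\}$ with (RF1) $\overline{g}_u\ge0$ and (RF2) for every unbounded $F\in\mathfrak{F}(\mathfrak{C})$ and $x\in F$, $\big(\min_{y\in\mathrm{conv}(V(F))}\|x-y\|\big)^p\le\sum_{u\in D(F)}\overline{g}_u(x)$. $\mathcal{G}$ is an interpolation function set for a bounded $\mathfrak{C}$ if some vertex interpolation function set for $\mathfrak{C}$ is contained in $\mathrm{span}_1(\mathcal{G})$; for unbounded $\mathfrak{C}$, $\mathcal{G}$ is a $p$-interpolation function set if both a vertex interpolation function set and a $p$-radial function set for $\mathfrak{C}$ are contained in $\mathrm{span}_1(\mathcal{G})$. *)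

theory Defs
  imports "HOL-Analysis.Analysis"
begin

text \<open>A norm on a real vector space (the statement allows an arbitrary norm on R^m).\<close>
definition is_norm :: "('a::real_vector \<Rightarrow> real) \<Rightarrow> bool" where
  "is_norm N \<longleftrightarrow> (\<forall>x. N x = 0 \<longleftrightarrow> x = 0) \<and>
                 (\<forall>c x. N (c *\<^sub>R x) = \<bar>c\<bar> * N x) \<and>
                 (\<forall>x y. N (x + y) \<le> N x + N y)"

definition span1 :: "('a \<Rightarrow> real) set \<Rightarrow> ('a \<Rightarrow> real) set" where
  "span1 G = {f. \<exists>(y0::real) (k::nat) (c::nat \<Rightarrow> real) (gs::nat \<Rightarrow> 'a \<Rightarrow> real).
                  (\<forall>j<k. gs j \<in> G) \<and> f = (\<lambda>x. y0 + (\<Sum>j<k. c j * gs j x))}"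

text \<open>Extreme points (library notion extreme_point_of, equivalent to {v} being a face).\<close>
definition Vset :: "'a::real_vector set \<Rightarrow> 'a set" where
  "Vset C = {v. v extreme_point_of C}"

text \<open>Directions are only determined up to positive
  scaling; we take the (Euclidean-)unit representative of each direction so that D(C)
  is a finite set.\<close>
definition Dset :: "'a::real_normed_vector set \<Rightarrow> 'a set" where
  "Dset C = {z. norm z = 1 \<and> (\<exists>x\<in>C. {x + t *\<^sub>R z | t. t \<ge> 0} face_of C)}"

definition polyhedral_cover :: "'a::euclidean_space set set \<Rightarrow> 'a set \<Rightarrow> bool" where
  "polyhedral_cover \<C> Y \<longleftrightarrow>
     finite \<C> \<and> (\<forall>C\<in>\<C>. polyhedron C \<and> Vset C \<noteq> {}) \<and>
     Y \<subseteq> \<Union>\<C> \<and>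
     (\<forall>C1\<in>\<C>. \<forall>C2\<in>\<C>. C1 \<inter> C2 \<noteq> {} \<longrightarrow> (C1 \<inter> C2) face_of C1 \<and> (C1 \<inter> C2) face_of C2)"

definition Faces :: "'a::real_vector set set \<Rightarrow> 'a set set" where
  "Faces \<C> = {F. F \<noteq> {} \<and> (\<exists>C\<in>\<C>. F face_of C)}"

definition Vcov :: "'a::real_vector set set \<Rightarrow> 'a set" where
  "Vcov \<C> = (\<Union>C\<in>\<C>. Vset C)"

definition Dcov :: "'a::real_normed_vector set set \<Rightarrow> 'a set" where
  "Dcov \<C> = (\<Union>C\<in>\<C>. Dset C)"

text \<open>Vertex interpolation function set {g v : v \<in> V(\<C>)}, functions on \<Union>\<C>
  (only their values on \<Union>\<C> matter).\<close>
definition vertex_interp_set :: "'a::real_vector set set \<Rightarrow> ('a \<Rightarrow> 'a \<Rightarrow> real) \<Rightarrow> bool" where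
  "vertex_interp_set \<C> g \<longleftrightarrow>
     (\<forall>v\<in>Vcov \<C>. \<forall>x\<in>\<Union>\<C>. g v x \<ge> 0) \<and>
     (\<forall>v\<in>Vcov \<C>. \<forall>v'\<in>Vcov \<C>. g v v' = (if v = v' then 1 else 0)) \<and>
     (\<forall>F\<in>Faces \<C>. \<forall>x\<in>F. (\<Sum>v\<in>Vset F. g v x) = 1) \<and>
     (\<forall>F\<in>Faces \<C>. \<forall>x\<in>F. \<forall>v\<in>Vcov \<C> - Vset F. g v x = 0)"

definition radial_set :: "('a::real_normed_vector \<Rightarrow> real) \<Rightarrow> real \<Rightarrow> 'a set set \<Rightarrow> ('a \<Rightarrow> 'a \<Rightarrow> real) \<Rightarrow> bool" where
  "radial_set N p \<C> gb \<longleftrightarrow>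
     (\<forall>u\<in>Dcov \<C>. \<forall>x\<in>\<Union>\<C>. gb u x \<ge> 0) \<and>
     (\<forall>F\<in>Faces \<C>. \<not> bounded F \<longrightarrow>
        (\<forall>x\<in>F. (INF y\<in>convex hull (Vset F). N (x - y)) powr p \<le> (\<Sum>u\<in>Dset F. gb u x)))"

definition interp_function_set :: "('a::euclidean_space \<Rightarrow> real) set \<Rightarrow> 'a set set \<Rightarrow> bool" where
  "interp_function_set G \<C> \<longleftrightarrow>
     (\<exists>g. vertex_interp_set \<C> g \<and> (\<forall>v\<in>Vcov \<C>. g v \<in> span1 G))"

definition p_interp_function_set ::
  "('a::euclidean_space \<Rightarrow> real) \<Rightarrow> real \<Rightarrow> ('a \<Rightarrow> real) set \<Rightarrow> 'a set set \<Rightarrow> bool" where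
  "p_interp_function_set N p G \<C> \<longleftrightarrow>
     (\<exists>g. vertex_interp_set \<C> g \<and> (\<forall>v\<in>Vcov \<C>. g v \<in> span1 G)) \<and>
     (\<exists>gb. radial_set N p \<C> gb \<and> (\<forall>u\<in>Dcov \<C>. gb u \<in> span1 G))"

text \<open>Coordinates are indexed by a finite type 'm (so m = CARD('m)).
  kl i = underline kappa_i, b i = beta_i.\<close>
definition knot :: "('m \<Rightarrow> real) \<Rightarrow> ('m \<Rightarrow> real) \<Rightarrow> 'm \<Rightarrow> nat \<Rightarrow> real" where
  "knot kl b i j = kl i + real j * b i"

definition Ints_i :: "('m \<Rightarrow> nat) \<Rightarrow> ('m \<Rightarrow> real) \<Rightarrow> ('m \<Rightarrow> real) \<Rightarrow> 'm \<Rightarrow> real set set" where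
  "Ints_i n kl b i = {{knot kl b i j .. knot kl b i (Suc j)} | j. j < n i}"

definition Ints_bar_i :: "('m \<Rightarrow> nat) \<Rightarrow> ('m \<Rightarrow> real) \<Rightarrow> ('m \<Rightarrow> real) \<Rightarrow> 'm \<Rightarrow> real set set" where
  "Ints_bar_i n kl b i = Ints_i n kl b i \<union> {{..knot kl b i 0}, {knot kl b i (n i)..}}"

definition prod_cells :: "('m::finite \<Rightarrow> real set set) \<Rightarrow> (real^'m) set set" where
  "prod_cells II = {{x. \<forall>i. x $ i \<in> I i} | I. \<forall>i. I i \<in> II i}"

definition cover0 :: "('m::finite \<Rightarrow> nat) \<Rightarrow> ('m \<Rightarrow> real) \<Rightarrow> ('m \<Rightarrow> real) \<Rightarrow> (real^'m) set set" where
  "cover0 n kl b = prod_cells (Ints_i n kl b)"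

definition cover_full :: "('m::finite \<Rightarrow> nat) \<Rightarrow> ('m \<Rightarrow> real) \<Rightarrow> ('m \<Rightarrow> real) \<Rightarrow> (real^'m) set set" where
  "cover_full n kl b = prod_cells (Ints_bar_i n kl b)"

text \<open>G_0. For L = {} the maximum over the empty set is -infinity, so the positive part is 0.\<close>
definition G0 :: "('m::finite \<Rightarrow> nat) \<Rightarrow> ('m \<Rightarrow> real) \<Rightarrow> ('m \<Rightarrow> real) \<Rightarrow> (real^'m \<Rightarrow> real) set" where
  "G0 n kl b = {(\<lambda>x. if L = {} then 0
                       else max 0 (Max ((\<lambda>i. max 0 ((x $ i - knot kl b i (j i)) / b i)) ` L)))
               | L j. (\<forall>i\<in>L. j i \<le> n i)}"

definition G1 :: "('m::finite \<Rightarrow> nat) \<Rightarrow> ('m \<Rightarrow> real) \<Rightarrow> ('m \<Rightarrow> real) \<Rightarrow> (real^'m \<Rightarrow> real) set" where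
  "G1 n kl b = G0 n kl b \<union> {(\<lambda>x. x $ i) | i. True}"

definition Gpow :: "('m::finite \<Rightarrow> nat) \<Rightarrow> ('m \<Rightarrow> real) \<Rightarrow> ('m \<Rightarrow> real) \<Rightarrow> real \<Rightarrow> (real^'m \<Rightarrow> real) set" where
  "Gpow n kl b p = G0 n kl b
      \<union> {(\<lambda>x. (max 0 (knot kl b i 0 - x $ i)) powr p) | i. True}
      \<union> {(\<lambda>x. (max 0 (x $ i - knot kl b i (n i))) powr p) | i. True}"

definition Gp :: "('m::finite \<Rightarrow> nat) \<Rightarrow> ('m \<Rightarrow> real) \<Rightarrow> ('m \<Rightarrow> real) \<Rightarrow> real \<Rightarrow> (real^'m \<Rightarrow> real) set" where
  "Gp n kl b p = (if p = 1 then G1 n kl b else Gpow n kl b p)"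

end

theory Submission
  imports Defs
begin
definition prodset :: "('m \<Rightarrow> real set) \<Rightarrow> (real^'m) set" where
  "prodset I = {x. \<forall>i. x$i \<in> I i}"

definition vupd :: "real^'m \<Rightarrow> 'm \<Rightarrow> real \<Rightarrow> real^'m" where
  "vupd x i s = (\<chi> j. if j = i then s else x $ j)"

lemma vupd_nth[simp]: "vupd x i s $ j = (if j = i then s else x $ j)"
  by (simp add: vupd_def)

lemma coord_open_segment:
  fixes p a b :: "real^'m"
  assumes "p \<in> open_segment a b"
  shows "(a$k = b$k \<and> p$k = a$k) \<or> p$k \<in> open_segment (a$k) (b$k)"
proof -
  obtain u where u: "0 < u" "u < 1" "p = (1 - u) *\<^sub>R a + u *\<^sub>R b"
    using assms by (auto simp: in_segment)
  have pk: "p$k = (1 - u) * a$k + u * b$k" using u by simp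
  show ?thesis
  proof (cases "a$k = b$k")
    case True then show ?thesis using pk by (simp add: algebra_simps)
  next
    case False then show ?thesis using pk u by (auto simp: in_segment)
  qed
qed

lemma prodset_open_segment:
  fixes v a b :: "real^'m"
  assumes "v$i \<in> open_segment s t"
  shows "v \<in> open_segment (vupd v i s) (vupd v i t)"
proof -
  obtain u where u: "s \<noteq> t" "0 < u" "u < 1" "v$i = (1 - u) * s + u * t"
    using assms by (auto simp: in_segment)
  have ne: "vupd v i s \<noteq> vupd v i t" using u by (metis vupd_nth)
  have "v = (1 - u) *\<^sub>R vupd v i s + u *\<^sub>R vupd v i t"
    using u by (auto simp: vec_eq_iff algebra_simps)
  then show ?thesis using ne u by (auto simp: in_segment)
qed

lemma vupd_in_prodset: "v \<in> prodset I \<Longrightarrow> s \<in> I i \<Longrightarrow> vupd v i s \<in> prodset I"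
  by (auto simp: prodset_def)

lemma ext_prodset:
  "v extreme_point_of prodset I \<longleftrightarrow> v \<in> prodset I \<and> (\<forall>i. v$i extreme_point_of I i)"
proof
  assume e: "v extreme_point_of prodset I"
  hence vin: "v \<in> prodset I" by (simp add: extreme_point_of_def)
  show "v \<in> prodset I \<and> (\<forall>i. v$i extreme_point_of I i)"
  proof (intro conjI allI vin)
    fix i
    show "v$i extreme_point_of I i"
      unfolding extreme_point_of_def
    proof (intro conjI ballI)
      show "v$i \<in> I i" using vin by (simp add: prodset_def)
      fix s t assume st: "s \<in> I i" "t \<in> I i"
      show "v$i \<notin> open_segment s t"
      proof
        assume "v$i \<in> open_segment s t"
        hence "v \<in> open_segment (vupd v i s) (vupd v i t)" by (rule prodset_open_segment)
        moreover have "vupd v i s \<in> prodset I" "vupd v i t \<in> prodset I"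
          using vin st by (auto intro: vupd_in_prodset)
        ultimately show False using e by (auto simp: extreme_point_of_def)
      qed
    qed
  qed
next
  assume a: "v \<in> prodset I \<and> (\<forall>i. v$i extreme_point_of I i)"
  show "v extreme_point_of prodset I"
    unfolding extreme_point_of_def
  proof (intro conjI ballI)
    show "v \<in> prodset I" using a by simp
    fix p q assume pq: "p \<in> prodset I" "q \<in> prodset I"
    show "v \<notin> open_segment p q"
    proof
      assume vs: "v \<in> open_segment p q"
      hence "p \<noteq> q" by (auto simp: in_segment)
      then obtain k where k: "p$k \<noteq> q$k" by (auto simp: vec_eq_iff)
      hence "v$k \<in> open_segment (p$k) (q$k)" using coord_open_segment[OF vs, of k] by auto
      moreover have "p$k \<in> I k" "q$k \<in> I k" using pq by (auto simp: prodset_def)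
      ultimately show False using a by (auto simp: extreme_point_of_def)
    qed
  qed
qed

lemma convex_prodset: "(\<And>i. convex (I i)) \<Longrightarrow> convex (prodset I)"
  unfolding convex_def prodset_def by auto

lemma real_nonext_interior:
  fixes I :: "real set"
  assumes "convex I" "t \<in> I" "\<not> t extreme_point_of I"
  shows "t \<in> interior I"
proof -
  obtain a c where ac: "a \<in> I" "c \<in> I" "t \<in> open_segment a c"
    using assms by (auto simp: extreme_point_of_def)
  have "closed_segment a c \<subseteq> I" using assms(1) ac by (simp add: closed_segment_subset)
  moreover have "open_segment a c \<subseteq> closed_segment a c" by (rule segment_open_subset_closed)
  moreover have "open (open_segment a c)" by (simp add: open_segment_eq_real_ivl)
  ultimately show ?thesis using ac(3) by (meson interior_maximal subset_trans interior_open interiorI)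
qed

lemma face_prodset_move:
  fixes F :: "(real^'m) set"
  assumes F: "F face_of prodset I" and conv: "\<And>i. convex (I i)"
    and x: "x \<in> F" and y: "y \<in> prodset I"
    and same: "\<And>i. x$i extreme_point_of I i \<Longrightarrow> y$i = x$i"
  shows "y \<in> F"
proof (cases "y = x")
  case True then show ?thesis using x by simp
next
  case False
  have xP: "x \<in> prodset I" using F x face_of_imp_subset by blast
  have "\<forall>i. \<exists>d>0. (\<not> x$i extreme_point_of I i \<longrightarrow> ball (x$i) d \<subseteq> I i)"
  proof
    fix i
    show "\<exists>d>0. (\<not> x$i extreme_point_of I i \<longrightarrow> ball (x$i) d \<subseteq> I i)"
    proof (cases "x$i extreme_point_of I i")
      case True then show ?thesis by (intro exI[of _ 1]) auto
    next
      case False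
      have xi: "x$i \<in> I i" using xP by (simp add: prodset_def)
      have "x$i \<in> interior (I i)"
        using real_nonext_interior[OF conv xi False] .
      then show ?thesis using False by (auto simp: mem_interior)
    qed
  qed
  then obtain d where d: "\<And>i. d i > 0" "\<And>i. \<not> x$i extreme_point_of I i \<Longrightarrow> ball (x$i) (d i) \<subseteq> I i"
    by metis
  define e where "e = Min (range d)"
  have e0: "e > 0" using d(1) by (simp add: e_def)
  have ed: "\<And>i. e \<le> d i" by (simp add: e_def)
  define eps where "eps = e / (norm (x - y) + 1)"
  have eps0: "eps > 0" using e0 unfolding eps_def
    by (intro divide_pos_pos add_nonneg_pos) auto
  define y' where "y' = x + eps *\<^sub>R (x - y)"
  have y'P: "y' \<in> prodset I"
    unfolding prodset_def
  proof (intro CollectI allI)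
    fix i
    show "y'$i \<in> I i"
    proof (cases "x$i extreme_point_of I i")
      case True then show ?thesis using same[OF True] xP by (simp add: y'_def prodset_def)
    next
      case False
      have "\<bar>x$i - y$i\<bar> \<le> norm (x - y)" using component_le_norm_cart[of "x - y" i] by simp
      hence "eps * \<bar>x$i - y$i\<bar> \<le> eps * norm (x - y)" using eps0 by (simp add: mult_left_mono)
      also have "\<dots> < e"
      proof -
        have "eps * norm (x - y) = e * (norm (x - y) / (norm (x - y) + 1))" by (simp add: eps_def)
        also have "\<dots> < e * 1"
        proof -
          have "norm (x - y) / (norm (x - y) + 1) < 1"
            by (subst divide_less_eq) (auto simp: add_nonneg_pos)
          then show ?thesis using e0 by (intro mult_strict_left_mono) auto
        qed
        finally show ?thesis by simp
      qed
      finally have "dist (x$i) (y'$i) < d i" using ed[of i] eps0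
        by (simp add: y'_def dist_real_def abs_mult)
      then show ?thesis using d(2)[OF False] by auto
    qed
  qed
  have ne: "y \<noteq> y'"
  proof
    assume "y = y'"
    hence "(1 + eps) *\<^sub>R (x - y) = 0" by (simp add: y'_def algebra_simps)
    thus False using False eps0 by simp
  qed
  define u where "u = 1 / (1 + eps)"
  have u: "0 < u" "u < 1" using eps0 by (auto simp: u_def)
  have "x = (1 - u) *\<^sub>R y + u *\<^sub>R y'"
  proof -
    have "(1 - u) *\<^sub>R y + u *\<^sub>R y' = (1 - u - u * eps) *\<^sub>R y + (u * (1 + eps)) *\<^sub>R x"
      by (simp add: y'_def algebra_simps)
    also have "u * (1 + eps) = 1" using eps0 by (simp add: u_def)
    also have "1 - u - u * eps = 0" using eps0 by (simp add: u_def field_simps)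
    finally show ?thesis by simp
  qed
  hence "x \<in> open_segment y y'" using ne u by (auto simp: in_segment)
  then show ?thesis using face_ofD[OF F _ y y'P x] by blast
qed

lemma halfline_face:
  fixes w :: "real^'m"
  assumes w: "w \<in> prodset I" and ext: "\<And>k. k \<noteq> i \<Longrightarrow> w$k extreme_point_of I k"
    and dn: "d \<noteq> 0"
    and ray: "\<And>t. t \<ge> 0 \<Longrightarrow> w$i + t * d \<in> I i"
    and onto: "\<And>s. s \<in> I i \<Longrightarrow> \<exists>t\<ge>0. s = w$i + t * d"
  shows "{w + t *\<^sub>R axis i d | t. t \<ge> 0} face_of prodset I"
  unfolding face_of_def
proof (intro conjI ballI impI)
  show "{w + t *\<^sub>R axis i d | t. t \<ge> 0} \<subseteq> prodset I"
  proof
    fix p assume "p \<in> {w + t *\<^sub>R axis i d | t. t \<ge> 0}"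
    then obtain t where t: "t \<ge> 0" "p = w + t *\<^sub>R axis i d" by auto
    show "p \<in> prodset I" unfolding prodset_def
    proof (intro CollectI allI)
      fix k show "p$k \<in> I k"
        using t w ray[OF t(1)] by (cases "k = i") (auto simp: prodset_def axis_def mult.commute)
    qed
  qed
  show "convex {w + t *\<^sub>R axis i d | t. t \<ge> 0}"
    unfolding convex_def
  proof (intro ballI allI impI)
    fix p q and u v :: real
    assume p: "p \<in> {w + t *\<^sub>R axis i d | t. t \<ge> 0}" and q: "q \<in> {w + t *\<^sub>R axis i d | t. t \<ge> 0}"
      and uv: "0 \<le> u" "0 \<le> v" "u + v = 1"
    obtain s where s: "s \<ge> 0" "p = w + s *\<^sub>R axis i d" using p by auto
    obtain t where t: "t \<ge> 0" "q = w + t *\<^sub>R axis i d" using q by auto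
    have "u *\<^sub>R p + v *\<^sub>R q = (u + v) *\<^sub>R w + (u * s + v * t) *\<^sub>R axis i d"
      using s t by (simp add: algebra_simps)
    also have "\<dots> = w + (u * s + v * t) *\<^sub>R axis i d" using uv by simp
    finally have eq: "u *\<^sub>R p + v *\<^sub>R q = w + (u * s + v * t) *\<^sub>R axis i d" .
    have nn: "u * s + v * t \<ge> 0" using uv s t by simp
    show "u *\<^sub>R p + v *\<^sub>R q \<in> {w + t *\<^sub>R axis i d | t. t \<ge> 0}"
      using eq nn by blast
  qed
  fix a b x
  assume a: "a \<in> prodset I" and b: "b \<in> prodset I"
    and x: "x \<in> {w + t *\<^sub>R axis i d | t. t \<ge> 0}" and seg: "x \<in> open_segment a b"
  obtain t where t: "t \<ge> 0" "x = w + t *\<^sub>R axis i d" using x by auto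
  have other: "a$k = w$k \<and> b$k = w$k" if "k \<noteq> i" for k
  proof -
    have xk: "x$k = w$k" using t that by (simp add: axis_def)
    have "a$k \<in> I k" "b$k \<in> I k" using a b by (auto simp: prodset_def)
    then show ?thesis using coord_open_segment[OF seg, of k] ext[OF that] xk
      by (auto simp: extreme_point_of_def)
  qed
  have mem: "c \<in> {w + t *\<^sub>R axis i d | t. t \<ge> 0}" if c: "c \<in> prodset I" "\<And>k. k \<noteq> i \<Longrightarrow> c$k = w$k" for c
  proof -
    obtain s where s: "s \<ge> 0" "c$i = w$i + s * d" using onto c(1) by (auto simp: prodset_def)
    have "c = w + s *\<^sub>R axis i d" using s c(2) by (auto simp: vec_eq_iff axis_def)
    then show ?thesis using s by auto
  qed
  show "a \<in> {w + t *\<^sub>R axis i d | t. t \<ge> 0}" using mem[OF a] other by auto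
  show "b \<in> {w + t *\<^sub>R axis i d | t. t \<ge> 0}" using mem[OF b] other by auto
qed

lemma halfline_face_axis:
  fixes x0 z :: "real^'m"
  assumes conv: "\<And>i. convex (I i)"
    and H: "{x0 + t *\<^sub>R z | t. t \<ge> 0} face_of prodset I"
    and zi: "z$i \<noteq> 0" and zk: "z$k \<noteq> 0"
  shows "i = k"
proof (rule ccontr)
  assume ik: "i \<noteq> k"
  let ?H = "{x0 + t *\<^sub>R z | t. t \<ge> 0}"
  have sub: "?H \<subseteq> prodset I" using H face_of_imp_subset by blast
  define p where "p = x0 + z"
  have pH: "p \<in> ?H" unfolding p_def by (intro CollectI exI[of _ 1]) auto
  have q1: "x0 + (1/2) *\<^sub>R z \<in> prodset I" using sub by (intro subsetD[OF sub]) (auto intro!: exI[of _ "1/2"])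
  have q2: "x0 + 2 *\<^sub>R z \<in> prodset I" using sub by (intro subsetD[OF sub]) (auto intro!: exI[of _ "2"])
  have pP: "p \<in> prodset I" using pH sub by blast
  define a where "a = vupd p i (x0$i + z$i / 2)"
  define c where "c = vupd p i (x0$i + 3/2 * z$i)"
  have ai: "x0$i + z$i / 2 \<in> I i" using q1 by (simp add: prodset_def)
  have ci: "x0$i + 3/2 * z$i \<in> I i"
  proof -
    have "(1/3) * (x0$i + (1/2) * z$i) + (2/3) * (x0$i + 2 * z$i) \<in> I i"
      using convexD[OF conv[of i], of "x0$i + (1/2) * z$i" "x0$i + 2 * z$i" "1/3" "2/3"] q1 q2
      by (auto simp: prodset_def)
    moreover have "(1/3) * (x0$i + (1/2) * z$i) + (2/3) * (x0$i + 2 * z$i) = x0$i + 3/2 * z$i"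
      by (simp add: algebra_simps)
    ultimately show ?thesis by simp
  qed
  have aP: "a \<in> prodset I" unfolding a_def using pP ai by (rule vupd_in_prodset)
  have cP: "c \<in> prodset I" unfolding c_def using pP ci by (rule vupd_in_prodset)
  have "p$i \<in> open_segment (x0$i + z$i / 2) (x0$i + 3/2 * z$i)"
    using zi unfolding in_segment
    by (intro conjI exI[of _ "1/2"]) (auto simp: p_def algebra_simps)
  hence "p \<in> open_segment a c" unfolding a_def c_def by (rule prodset_open_segment)
  hence "c \<in> ?H" using face_ofD[OF H _ aP cP pH] by blast
  then obtain t where t: "c = x0 + t *\<^sub>R z" by auto
  have "c$k = p$k" using ik by (simp add: c_def)
  hence "x0$k + t * z$k = x0$k + z$k" using t by (simp add: p_def)
  hence t1: "t = 1" using zk by simp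
  have "c$i = x0$i + 3/2 * z$i" by (simp add: c_def)
  hence "x0$i + 3/2 * z$i = x0$i + z$i" using t t1 by simp
  thus False using zi by simp
qed

lemma face_prodset_prod:
  assumes "\<And>i. J i face_of I i"
  shows "prodset J face_of prodset I"
  unfolding face_of_def
proof (intro conjI ballI impI)
  show "prodset J \<subseteq> prodset I" using assms face_of_imp_subset by (fastforce simp: prodset_def)
  show "convex (prodset J)" using assms face_of_imp_convex by (intro convex_prodset) blast
  fix a c x assume a: "a \<in> prodset I" and c: "c \<in> prodset I" and x: "x \<in> prodset J"
    and seg: "x \<in> open_segment a c"
  have "a$k \<in> J k \<and> c$k \<in> J k" for k
  proof -
    have "a$k \<in> I k" "c$k \<in> I k" "x$k \<in> J k" using a c x by (auto simp: prodset_def)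
    then show ?thesis using coord_open_segment[OF seg, of k] face_ofD[OF assms[of k]] by auto
  qed
  then show "a \<in> prodset J" "c \<in> prodset J" by (auto simp: prodset_def)
qed

lemma ext_lower:
  fixes S :: "real set"
  assumes "p \<in> S" "\<And>s. s \<in> S \<Longrightarrow> p \<le> s"
  shows "p extreme_point_of S"
  unfolding extreme_point_of_def
proof (intro conjI ballI)
  show "p \<in> S" by fact
  fix a c assume ac: "a \<in> S" "c \<in> S"
  show "p \<notin> open_segment a c"
  proof
    assume "p \<in> open_segment a c"
    then obtain u where u: "a \<noteq> c" "0 < u" "u < 1" "p = (1 - u) * a + u * c"
      by (auto simp: in_segment)
    have "p \<le> a" "p \<le> c" using assms ac by auto
    hence h1: "(1-u)*(a-p) \<ge> 0" "u*(c-p) \<ge> 0" using u by auto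
    have "(1-u)*(a-p) + u*(c-p) = 0" using u(4) by (simp add: algebra_simps)
    hence "(1-u)*(a-p) = 0" "u*(c-p) = 0" using h1 by linarith+
    then show False using u by auto
  qed
qed

lemma ext_upper:
  fixes S :: "real set"
  assumes "p \<in> S" "\<And>s. s \<in> S \<Longrightarrow> s \<le> p"
  shows "p extreme_point_of S"
  unfolding extreme_point_of_def
proof (intro conjI ballI)
  show "p \<in> S" by fact
  fix a c assume ac: "a \<in> S" "c \<in> S"
  show "p \<notin> open_segment a c"
  proof
    assume "p \<in> open_segment a c"
    then obtain u where u: "a \<noteq> c" "0 < u" "u < 1" "p = (1 - u) * a + u * c"
      by (auto simp: in_segment)
    have "a \<le> p" "c \<le> p" using assms ac by auto
    hence h1: "(1-u)*(p-a) \<ge> 0" "u*(p-c) \<ge> 0" using u by auto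
    have "(1-u)*(p-a) + u*(p-c) = 0" using u(4) by (simp add: algebra_simps)
    hence "(1-u)*(p-a) = 0" "u*(p-c) = 0" using h1 by linarith+
    then show False using u by auto
  qed
qed

lemma finite_vecs:
  assumes "\<And>i. finite (B i)"
  shows "finite {v::real^'m. \<forall>i. v$i \<in> B i}"
proof -
  have "{v::real^'m. \<forall>i. v$i \<in> B i} \<subseteq> vec_lambda ` (PiE UNIV B)"
  proof
    fix v :: "real^'m" assume "v \<in> {v. \<forall>i. v$i \<in> B i}"
    hence "vec_nth v \<in> PiE UNIV B" by auto
    then show "v \<in> vec_lambda ` (PiE UNIV B)" by (metis image_eqI vec_nth_inverse)
  qed
  moreover have "finite (PiE UNIV B)" using assms by (simp add: finite_PiE)
  ultimately show ?thesis by (meson finite_imageI finite_subset)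
qed

locale grid =
  fixes n :: "'m::finite \<Rightarrow> nat" and kl b :: "'m \<Rightarrow> real"
  assumes n1: "\<And>i. n i \<ge> 1" and bpos: "\<And>i. b i > 0"
begin

definition K :: "'m \<Rightarrow> int \<Rightarrow> real" where "K i c = kl i + of_int c * b i"

definition Iv :: "'m \<Rightarrow> int \<Rightarrow> real set" where
  "Iv i c = {t. (0 \<le> c \<longrightarrow> K i c \<le> t) \<and> (c < int (n i) \<longrightarrow> t \<le> K i (c+1))}"

definition endpts :: "'m \<Rightarrow> int \<Rightarrow> real set" where
  "endpts i c = (if 0 \<le> c then {K i c} else {}) \<union> (if c < int (n i) then {K i (c+1)} else {})"

definition cell :: "('m \<Rightarrow> int) \<Rightarrow> (real^'m) set" where
  "cell c = prodset (\<lambda>i. Iv i (c i))"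

definition fullidx :: "('m \<Rightarrow> int) set" where
  "fullidx = {c. \<forall>i. -1 \<le> c i \<and> c i \<le> int (n i)}"

definition corners :: "('m \<Rightarrow> int) \<Rightarrow> (real^'m) set" where
  "corners c = {v. \<forall>i. v$i \<in> endpts i (c i)}"

definition gridpts :: "(real^'m) set" where
  "gridpts = {v. \<forall>i. \<exists>a. 0 \<le> a \<and> a \<le> int (n i) \<and> v$i = K i a}"

lemma K_lt_iff: "K i a < K i a' \<longleftrightarrow> a < a'"
  using bpos[of i] by (simp add: K_def)
lemma K_le_iff: "K i a \<le> K i a' \<longleftrightarrow> a \<le> a'"
  using bpos[of i] by (simp add: K_def)
lemma K_eq_iff: "K i a = K i a' \<longleftrightarrow> a = a'"
  using bpos[of i] by (simp add: K_def)
lemma K_plus1: "K i (a + 1) = K i a + b i"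
  by (simp add: K_def algebra_simps)

lemma knot_K: "knot kl b i j = K i (int j)"
  by (simp add: knot_def K_def)

lemma convex_Iv: "convex (Iv i c)"
proof -
  have "Iv i c = (if 0 \<le> c then {K i c..} else UNIV) \<inter> (if c < int (n i) then {..K i (c+1)} else UNIV)"
    by (auto simp: Iv_def)
  then show ?thesis by (auto intro!: convex_Int)
qed

lemma endpts_sub: "endpts i c \<subseteq> Iv i c"
  using bpos[of i] by (auto simp: endpts_def Iv_def K_plus1 K_le_iff)

lemma ext_Iv: "t extreme_point_of Iv i c \<longleftrightarrow> t \<in> endpts i c"
proof
  assume t: "t \<in> endpts i c"
  show "t extreme_point_of Iv i c"
  proof (cases "0 \<le> c \<and> t = K i c")
    case True then show ?thesis using t endpts_sub by (intro ext_lower) (auto simp: Iv_def)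
  next
    case False
    hence "c < int (n i) \<and> t = K i (c+1)" using t by (auto simp: endpts_def split: if_splits)
    then show ?thesis using t endpts_sub by (intro ext_upper) (auto simp: Iv_def)
  qed
next
  assume e: "t extreme_point_of Iv i c"
  show "t \<in> endpts i c"
  proof (rule ccontr)
    assume nt: "t \<notin> endpts i c"
    have tI: "t \<in> Iv i c" using e by (simp add: extreme_point_of_def)
    define U where "U = (if 0 \<le> c then {K i c<..} else UNIV) \<inter> (if c < int (n i) then {..<K i (c+1)} else UNIV)"
    have "open U" unfolding U_def
      by (intro open_Int) (auto intro: open_greaterThan open_lessThan)
    moreover have "t \<in> U" using tI nt by (auto simp: U_def Iv_def endpts_def split: if_splits)
    moreover have "U \<subseteq> Iv i c" by (auto simp: U_def Iv_def)
    ultimately have "t \<in> interior (Iv i c)" by (meson interiorI)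
    thus False using extreme_point_not_in_interior[OF e] by simp
  qed
qed

lemma Vset_cell: "Vset (cell c) = corners c"
proof -
  have "v extreme_point_of cell c \<longleftrightarrow> v \<in> corners c" for v
    unfolding cell_def ext_prodset ext_Iv
    using endpts_sub by (auto simp: corners_def prodset_def)
  then show ?thesis by (auto simp: Vset_def)
qed

lemma finite_endpts: "finite (endpts i c)" by (simp add: endpts_def)

lemma finite_corners: "finite (corners c)"
  unfolding corners_def by (rule finite_vecs) (rule finite_endpts)

lemma endpts_ne: "c \<in> fullidx \<Longrightarrow> endpts i (c i) \<noteq> {}"
  using n1[of i] by (auto simp: endpts_def fullidx_def)

lemma corners_ne: assumes "c \<in> fullidx" shows "corners c \<noteq> {}"
proof -
  have "\<forall>i. \<exists>t. t \<in> endpts i (c i)" using endpts_ne[OF assms] by blast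
  then obtain f where "\<And>i. f i \<in> endpts i (c i)" by metis
  hence "vec_lambda f \<in> corners c" by (simp add: corners_def)
  thus ?thesis by blast
qed

lemma corners_grid: assumes "c \<in> fullidx" shows "corners c \<subseteq> gridpts"
proof
  fix v assume v: "v \<in> corners c"
  show "v \<in> gridpts" unfolding gridpts_def
  proof (intro CollectI allI)
    fix i
    have "v$i \<in> endpts i (c i)" using v by (simp add: corners_def)
    have ci: "-1 \<le> c i" "c i \<le> int (n i)" using assms by (auto simp: fullidx_def)
    show "\<exists>a\<ge>0. a \<le> int (n i) \<and> v $ i = K i a"
    proof (cases "0 \<le> c i \<and> v$i = K i (c i)")
      case True then show ?thesis using ci by blast
    next
      case False
      hence "c i < int (n i) \<and> v$i = K i (c i + 1)" using \<open>v$i \<in> endpts i (c i)\<close>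
        by (auto simp: endpts_def split: if_splits)
      then show ?thesis using ci by (intro exI[of _ "c i + 1"]) auto
    qed
  qed
qed

end

definition mn :: "real \<Rightarrow> 'm set \<Rightarrow> ('m \<Rightarrow> real) \<Rightarrow> real" where
  "mn Q K f = Min (insert Q (f ` K))"
definition mx :: "real \<Rightarrow> 'm set \<Rightarrow> ('m \<Rightarrow> real) \<Rightarrow> real" where
  "mx P K f = Max (insert P (f ` K))"

lemma mn_empty[simp]: "mn Q {} f = Q" by (simp add: mn_def)
lemma mx_empty[simp]: "mx P {} f = P" by (simp add: mx_def)

lemma mn_insert: "finite K \<Longrightarrow> mn Q (insert k K) f = mn (min Q (f k)) K f"
  by (cases "K = {}") (simp_all add: mn_def insert_commute min.assoc)

lemma mx_insert: "finite K \<Longrightarrow> mx P (insert k K) f = mx (max P (f k)) K f"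
  by (cases "K = {}") (simp_all add: mx_def insert_commute max.assoc)

lemma mn_cong: "(\<And>i. i \<in> K \<Longrightarrow> f i = g i) \<Longrightarrow> mn Q K f = mn Q K g"
  unfolding mn_def by (metis image_cong)
lemma mx_cong: "(\<And>i. i \<in> K \<Longrightarrow> f i = g i) \<Longrightarrow> mx P K f = mx P K g"
  unfolding mx_def by (metis image_cong)

lemma prod_tile_sum:
  fixes A :: "'m::finite \<Rightarrow> real set" and q p :: "'m \<Rightarrow> real \<Rightarrow> real"
  assumes fin: "\<And>i. finite (A i)"
    and tile: "\<And>i P Q. 0 \<le> P \<Longrightarrow> Q \<le> 1 \<Longrightarrow>
        (\<Sum>w\<in>A i. max 0 (min Q (q i w) - max P (p i w))) = max 0 (Q - P)"
    and q1: "\<And>i w. q i w \<le> 1" and p0: "\<And>i w. 0 \<le> p i w"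
  shows "finite K \<Longrightarrow> 0 \<le> P \<Longrightarrow> Q \<le> 1 \<Longrightarrow>
    (\<Sum>v\<in>{v. \<forall>i. (i\<in>K \<longrightarrow> v$i \<in> A i) \<and> (i \<notin> K \<longrightarrow> v$i = w0$i)}.
       max 0 (mn Q K (\<lambda>i. q i (v$i)) - mx P K (\<lambda>i. p i (v$i)))) = max 0 (Q - P)"
proof (induction K arbitrary: w0 P Q rule: finite_induct)
  case empty
  have "{v::real^'m. \<forall>i. (i\<in>{} \<longrightarrow> v$i \<in> A i) \<and> (i \<notin> {} \<longrightarrow> v$i = w0$i)} = {w0}"
    by (auto simp: vec_eq_iff)
  then show ?case by simp
next
  case (insert k K)
  let ?V = "\<lambda>K w0. {v::real^'m. \<forall>i. (i\<in>K \<longrightarrow> v$i \<in> A i) \<and> (i \<notin> K \<longrightarrow> v$i = w0$i)}"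
  have finV: "finite (?V K w)" for w
  proof -
    have "?V K w \<subseteq> {v. \<forall>i. v$i \<in> A i \<union> {w$i}}" by auto
    moreover have "finite {v::real^'m. \<forall>i. v$i \<in> A i \<union> {w$i}}" by (rule finite_vecs) (simp add: fin)
    ultimately show ?thesis by (rule finite_subset)
  qed
  have split: "?V (insert k K) w0 = (\<Union>w\<in>A k. ?V K (vupd w0 k w))"
  proof (intro equalityI subsetI)
    fix v assume v: "v \<in> ?V (insert k K) w0"
    hence "v \<in> ?V K (vupd w0 k (v$k))" using insert.hyps(2) by auto
    moreover have "v$k \<in> A k" using v by auto
    ultimately show "v \<in> (\<Union>w\<in>A k. ?V K (vupd w0 k w))" by blast
  next
    fix v assume "v \<in> (\<Union>w\<in>A k. ?V K (vupd w0 k w))"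
    then obtain w where w: "w \<in> A k" "v \<in> ?V K (vupd w0 k w)" by blast
    then show "v \<in> ?V (insert k K) w0" using insert.hyps(2) by (auto split: if_splits)
  qed
  have disj: "?V K (vupd w0 k w) \<inter> ?V K (vupd w0 k w') = {}" if "w \<noteq> w'" for w w'
    using that insert.hyps(2) by auto
  have inner: "(\<Sum>v\<in>?V K (vupd w0 k w). max 0 (mn Q (insert k K) (\<lambda>i. q i (v$i)) - mx P (insert k K) (\<lambda>i. p i (v$i))))
       = max 0 (min Q (q k w) - max P (p k w))" for w
  proof -
    have "(\<Sum>v\<in>?V K (vupd w0 k w). max 0 (mn Q (insert k K) (\<lambda>i. q i (v$i)) - mx P (insert k K) (\<lambda>i. p i (v$i))))
        = (\<Sum>v\<in>?V K (vupd w0 k w). max 0 (mn (min Q (q k w)) K (\<lambda>i. q i (v$i)) - mx (max P (p k w)) K (\<lambda>i. p i (v$i))))"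
    proof (rule sum.cong[OF refl])
      fix v assume "v \<in> ?V K (vupd w0 k w)"
      hence "v$k = w" using insert.hyps(2) by auto
      then show "max 0 (mn Q (insert k K) (\<lambda>i. q i (v$i)) - mx P (insert k K) (\<lambda>i. p i (v$i)))
          = max 0 (mn (min Q (q k w)) K (\<lambda>i. q i (v$i)) - mx (max P (p k w)) K (\<lambda>i. p i (v$i)))"
        using insert.hyps(1) by (simp add: mn_insert mx_insert)
    qed
    also have "\<dots> = max 0 (min Q (q k w) - max P (p k w))"
      using insert.prems by (intro insert.IH) auto
    finally show ?thesis .
  qed
  have "(\<Sum>v\<in>?V (insert k K) w0. max 0 (mn Q (insert k K) (\<lambda>i. q i (v$i)) - mx P (insert k K) (\<lambda>i. p i (v$i))))
      = (\<Sum>w\<in>A k. \<Sum>v\<in>?V K (vupd w0 k w). max 0 (mn Q (insert k K) (\<lambda>i. q i (v$i)) - mx P (insert k K) (\<lambda>i. p i (v$i))))"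
    unfolding split
  proof (rule sum.UNION_disjoint)
    show "finite (A k)" by (rule fin)
    show "\<forall>w\<in>A k. finite (?V K (vupd w0 k w))" using finV by blast
    show "\<forall>w\<in>A k. \<forall>w'\<in>A k. w \<noteq> w' \<longrightarrow> ?V K (vupd w0 k w) \<inter> ?V K (vupd w0 k w') = {}"
      using disj by blast
  qed
  also have "\<dots> = (\<Sum>w\<in>A k. max 0 (min Q (q k w) - max P (p k w)))"
    using inner by simp
  also have "\<dots> = max 0 (Q - P)" using insert.prems by (intro tile) auto
  finally show ?case .
qed

context grid begin

definition hcl :: "real \<Rightarrow> real" where "hcl t = min 1 (max 0 t)"

definition qf :: "'m \<Rightarrow> real \<Rightarrow> real \<Rightarrow> real" where
  "qf i w t = (if w = K i 0 then 1 else hcl ((t - w) / b i + 1))"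

definition pf :: "'m \<Rightarrow> real \<Rightarrow> real \<Rightarrow> real" where
  "pf i w t = (if w = K i (int (n i)) then 0 else hcl ((t - w) / b i))"

definition gfun :: "real^'m \<Rightarrow> real^'m \<Rightarrow> real" where
  "gfun v x = max 0 (Min (range (\<lambda>i. qf i (v$i) (x$i))) - Max (range (\<lambda>i. pf i (v$i) (x$i))))"

lemma qf_le1: "qf i w t \<le> 1" by (simp add: qf_def hcl_def)
lemma qf_ge0: "0 \<le> qf i w t" by (simp add: qf_def hcl_def)
lemma pf_le1: "pf i w t \<le> 1" by (simp add: pf_def hcl_def)
lemma pf_ge0: "0 \<le> pf i w t" by (simp add: pf_def hcl_def)

lemma gfun_ge0: "0 \<le> gfun v x" by (simp add: gfun_def)

lemma norm_coord: "(t - K i a) / b i = (t - kl i) / b i - of_int a"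
  using bpos[of i] by (simp add: K_def field_simps)

lemma K_le_t: "K i a \<le> t \<longleftrightarrow> of_int a \<le> (t - kl i) / b i"
  using bpos[of i] by (simp add: K_def field_simps)
lemma t_le_K: "t \<le> K i a \<longleftrightarrow> (t - kl i) / b i \<le> of_int a"
  using bpos[of i] by (simp add: K_def field_simps)
lemma K_eq_t: "K i a = t \<longleftrightarrow> of_int a = (t - kl i) / b i"
  using bpos[of i] by (auto simp: K_def field_simps)

lemma tile_1d:
  assumes c: "-1 \<le> c" "c \<le> int (n i)" and t: "t \<in> Iv i c" and P: "0 \<le> P" and Q: "Q \<le> 1"
  shows "(\<Sum>w\<in>endpts i c. max 0 (min Q (qf i w t) - max P (pf i w t))) = max 0 (Q - P)"
proof -
  define y where "y = (t - kl i) / b i"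
  have n1i: "int (n i) \<ge> 1" using n1[of i] by simp
  have K0n: "K i 0 \<noteq> K i (int (n i))" using n1i by (simp add: K_eq_iff)
  have ty: "0 \<le> c \<longrightarrow> of_int c \<le> y" "c < int (n i) \<longrightarrow> y \<le> of_int c + 1"
    using t by (auto simp: Iv_def y_def K_le_t t_le_K)
  consider "c = -1" | "c = int (n i)" | "0 \<le> c \<and> c < int (n i)" using c by linarith
  then show ?thesis
  proof cases
    case 1
    have e: "endpts i c = {K i 0}" using 1 n1i by (auto simp: endpts_def)
    have "y \<le> 0" using ty 1 n1i by simp
    hence "pf i (K i 0) t = 0" using K0n by (simp add: pf_def hcl_def norm_coord y_def[symmetric])
    moreover have "qf i (K i 0) t = 1" by (simp add: qf_def)
    ultimately show ?thesis using e P Q by simp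
  next
    case 2
    have e: "endpts i c = {K i (int (n i))}" using 2 n1i by (auto simp: endpts_def)
    have "of_int c \<le> y" using ty 2 n1i by simp
    hence "qf i (K i (int (n i))) t = 1" using K0n 2
      by (simp add: qf_def hcl_def norm_coord y_def[symmetric])
    moreover have "pf i (K i (int (n i))) t = 0" by (simp add: pf_def)
    ultimately show ?thesis using e P Q by simp
  next
    case 3
    have ne: "K i c \<noteq> K i (c+1)" by (simp add: K_eq_iff)
    have e: "endpts i c = {K i c, K i (c+1)}" using 3 by (auto simp: endpts_def)
    define u where "u = y - of_int c"
    have u: "0 \<le> u" "u \<le> 1" using ty 3 by (auto simp: u_def)
    have q1: "qf i (K i c) t = 1"
      using u by (auto simp: qf_def hcl_def norm_coord y_def[symmetric] u_def)
    have p1: "pf i (K i c) t = u"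
      using u 3 by (auto simp: pf_def hcl_def norm_coord y_def[symmetric] u_def K_eq_iff)
    have q2: "qf i (K i (c+1)) t = u"
      using u 3 by (auto simp: qf_def hcl_def norm_coord y_def[symmetric] u_def K_eq_iff)
    have p2: "pf i (K i (c+1)) t = 0"
      using u 3 by (auto simp: pf_def hcl_def norm_coord y_def[symmetric] u_def K_eq_iff)
    have "(\<Sum>w\<in>endpts i c. max 0 (min Q (qf i w t) - max P (pf i w t)))
        = max 0 (min Q 1 - max P u) + max 0 (min Q u - max P 0)"
      using ne by (simp add: e q1 p1 q2 p2)
    also have "\<dots> = max 0 (Q - P)" using u P Q by (auto simp: min_def max_def)
    finally show ?thesis .
  qed
qed

lemma near_1d:
  assumes a: "0 \<le> a" "a \<le> int (n i)" and c: "-1 \<le> c" "c \<le> int (n i)" and t: "t \<in> Iv i c"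
    and q: "qf i (K i a) t > 0" and p: "pf i (K i a) t < 1"
  shows "K i a \<in> endpts i c \<and> (t \<in> endpts i c \<longrightarrow> K i a = t)"
proof -
  define y where "y = (t - kl i) / b i"
  have ty: "0 \<le> c \<longrightarrow> of_int c \<le> y" "c < int (n i) \<longrightarrow> y \<le> of_int c + 1"
    using t by (auto simp: Iv_def y_def K_le_t t_le_K)
  have qa: "a = 0 \<or> of_int a - 1 < y"
    using q by (auto simp: qf_def hcl_def norm_coord y_def[symmetric] K_eq_iff split: if_splits)
  have pa: "a = int (n i) \<or> y < of_int a + 1"
    using p by (auto simp: pf_def hcl_def norm_coord y_def[symmetric] K_eq_iff split: if_splits)
  have ep: "t \<in> endpts i c \<longleftrightarrow> (0 \<le> c \<and> y = of_int c) \<or> (c < int (n i) \<and> y = of_int c + 1)"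
  proof -
    have e1: "t = K i c \<longleftrightarrow> y = of_int c" using K_eq_t[of i c t] by (auto simp: y_def)
    have e2: "t = K i (c+1) \<longleftrightarrow> y = of_int c + 1" using K_eq_t[of i "c+1" t] by (auto simp: y_def)
    show ?thesis unfolding endpts_def using e1 e2 by auto
  qed
  consider "a \<le> c - 1" | "a = c" | "a = c + 1" | "a \<ge> c + 2" by linarith
  then have both: "((0 \<le> c \<and> a = c) \<or> (c < int (n i) \<and> a = c + 1)) \<and> ((0 \<le> c \<and> y = of_int c \<longrightarrow> a = c) \<and> (c < int (n i) \<and> y = of_int c + 1 \<longrightarrow> a = c + 1))"
  proof cases
    case 1
    hence r: "of_int a \<le> (of_int c :: real) - 1" by (metis of_int_diff of_int_le_iff of_int_1)
    have False
    proof (cases "a = int (n i)")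
      case True then show False using 1 c by linarith
    next
      case False
      hence "y < of_int a + 1" using pa by simp
      moreover have "0 \<le> c" using 1 a by linarith
      ultimately show False using ty r by linarith
    qed
    then show ?thesis by blast
  next
    case 2
    have "0 \<le> c" using 2 a by simp
    then show ?thesis
    proof (intro conjI impI)
      show "(0 \<le> c \<and> a = c) \<or> (c < int (n i) \<and> a = c + 1)" using 2 \<open>0 \<le> c\<close> by simp
      show "a = c" by fact
      assume h: "c < int (n i) \<and> y = of_int c + 1"
      have "a \<noteq> int (n i)" using h 2 by simp
      hence "y < of_int a + 1" using pa by simp
      then show "a = c + 1" using h 2 by simp
    qed
  next
    case 3
    have "c < int (n i)" using 3 a by simp
    then show ?thesis
    proof (intro conjI impI)
      show "(0 \<le> c \<and> a = c) \<or> (c < int (n i) \<and> a = c + 1)" using 3 \<open>c < int (n i)\<close> by simp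
      show "a = c + 1" by fact
      assume h: "0 \<le> c \<and> y = of_int c"
      have "a \<noteq> 0" using h 3 by simp
      hence "of_int a - 1 < y" using qa by simp
      then show "a = c" using h 3 by simp
    qed
  next
    case 4
    hence r: "(of_int c :: real) + 2 \<le> of_int a" by (metis of_int_add of_int_le_iff of_int_numeral)
    have False
    proof (cases "a = 0")
      case True then show False using 4 c by linarith
    next
      case False
      hence "of_int a - 1 < y" using qa by simp
      moreover have "c < int (n i)" using 4 a by linarith
      ultimately show False using ty r by linarith
    qed
    then show ?thesis by blast
  qed
  have main: "(0 \<le> c \<and> a = c) \<or> (c < int (n i) \<and> a = c + 1)" and ex: "(0 \<le> c \<and> y = of_int c \<longrightarrow> a = c) \<and> (c < int (n i) \<and> y = of_int c + 1 \<longrightarrow> a = c + 1)" using both by blast+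
  have "K i a \<in> endpts i c" using main by (auto simp: endpts_def)
  moreover have "t \<in> endpts i c \<longrightarrow> K i a = t"
  proof
    assume "t \<in> endpts i c"
    hence "(0 \<le> c \<and> y = of_int c) \<or> (c < int (n i) \<and> y = of_int c + 1)" using ep by simp
    hence "of_int a = y" using ex by auto
    then show "K i a = t" by (simp add: K_eq_t y_def)
  qed
  ultimately show ?thesis by blast
qed

end

context grid begin

lemma mn_UNIV: fixes f :: "'m \<Rightarrow> real" assumes "\<And>i. f i \<le> 1" shows "mn 1 UNIV f = Min (range f)"
proof -
  have "Min (range f) \<le> f undefined" by simp
  hence "Min (range f) \<le> 1" using assms[of undefined] by linarith
  then show ?thesis unfolding mn_def by (simp add: Min_insert)
qed

lemma mx_UNIV: fixes f :: "'m \<Rightarrow> real" assumes "\<And>i. 0 \<le> f i" shows "mx 0 UNIV f = Max (range f)"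
proof -
  have "f undefined \<le> Max (range f)" by simp
  hence "0 \<le> Max (range f)" using assms[of undefined] by linarith
  then show ?thesis unfolding mx_def by (simp add: Max_insert)
qed

lemma sum_cell:
  assumes c: "c \<in> fullidx" and x: "x \<in> cell c"
  shows "(\<Sum>v\<in>corners c. gfun v x) = 1"
proof -
  have ci: "-1 \<le> c i" "c i \<le> int (n i)" for i using c by (auto simp: fullidx_def)
  have xi: "x$i \<in> Iv i (c i)" for i using x by (auto simp: cell_def prodset_def)
  have set: "{v. \<forall>i. (i\<in>(UNIV::'m set) \<longrightarrow> v$i \<in> endpts i (c i)) \<and> (i \<notin> UNIV \<longrightarrow> v$i = x$i)} = corners c"
    by (auto simp: corners_def)
  have "(\<Sum>v\<in>{v. \<forall>i. (i\<in>(UNIV::'m set) \<longrightarrow> v$i \<in> endpts i (c i)) \<and> (i \<notin> UNIV \<longrightarrow> v$i = x$i)}.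
          max 0 (mn 1 UNIV (\<lambda>i. qf i (v$i) (x$i)) - mx 0 UNIV (\<lambda>i. pf i (v$i) (x$i)))) = max 0 (1 - 0)"
    by (rule prod_tile_sum[where A="\<lambda>i. endpts i (c i)" and q="\<lambda>i w. qf i w (x$i)" and p="\<lambda>i w. pf i w (x$i)"])
       (auto simp: finite_endpts tile_1d ci xi qf_le1 pf_ge0)
  then show ?thesis unfolding set gfun_def by (simp add: mn_UNIV mx_UNIV qf_le1 pf_ge0)
qed

lemma near_cell:
  assumes v: "v \<in> gridpts" and c: "c \<in> fullidx" and x: "x \<in> cell c" and g: "gfun v x > 0"
  shows "v \<in> corners c \<and> (\<forall>i. x$i \<in> endpts i (c i) \<longrightarrow> v$i = x$i)"
proof -
  let ?q = "\<lambda>i. qf i (v$i) (x$i)" and ?p = "\<lambda>i. pf i (v$i) (x$i)"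
  have mm: "Min (range ?q) > Max (range ?p)" using g unfolding gfun_def by (simp add: less_max_iff_disj)
  have each: "v$i \<in> endpts i (c i) \<and> (x$i \<in> endpts i (c i) \<longrightarrow> v$i = x$i)" for i
  proof -
    have h: "?q i \<ge> Min (range ?q)" "?p i \<le> Max (range ?p)" by auto
    have qp: "?q i > 0" "?p i < 1" using h mm qf_le1[of i "v$i" "x$i"] pf_ge0[of i "v$i" "x$i"]
      by linarith+
    obtain a where a: "0 \<le> a" "a \<le> int (n i)" "v$i = K i a" using v by (auto simp: gridpts_def)
    have ci: "-1 \<le> c i" "c i \<le> int (n i)" using c by (auto simp: fullidx_def)
    have xi: "x$i \<in> Iv i (c i)" using x by (auto simp: cell_def prodset_def)
    show ?thesis using near_1d[OF a(1,2) ci xi] qp a(3) by simp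
  qed
  then show ?thesis by (auto simp: corners_def)
qed

lemma corners_sub_cell: "corners c \<subseteq> cell c"
  using endpts_sub by (auto simp: corners_def cell_def prodset_def)

lemma face_pos_in_Vset:
  assumes c: "c \<in> fullidx" and F: "F face_of cell c" and x: "x \<in> F"
    and v: "v \<in> gridpts" and g: "gfun v x > 0"
  shows "v \<in> Vset F"
proof -
  have xc: "x \<in> cell c" using F x face_of_imp_subset by blast
  have nr: "v \<in> corners c" "\<And>i. x$i \<in> endpts i (c i) \<Longrightarrow> v$i = x$i"
    using near_cell[OF v c xc g] by auto
  have same: "v$i = x$i" if "x$i extreme_point_of Iv i (c i)" for i using nr(2) that ext_Iv by blast
  have vP: "v \<in> prodset (\<lambda>i. Iv i (c i))" using nr(1) corners_sub_cell unfolding cell_def by blast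
  have F': "F face_of prodset (\<lambda>i. Iv i (c i))" using F by (simp add: cell_def)
  have "v \<in> F" by (rule face_prodset_move[OF F' convex_Iv x vP same])
  moreover have "v extreme_point_of cell c" using nr(1) Vset_cell[of c] by (auto simp: Vset_def)
  ultimately show ?thesis using extreme_point_of_face[OF F] by (auto simp: Vset_def)
qed

lemma face_sum:
  assumes c: "c \<in> fullidx" and F: "F face_of cell c" and x: "x \<in> F"
  shows "(\<Sum>v\<in>Vset F. gfun v x) = 1"
proof -
  have xc: "x \<in> cell c" using F x face_of_imp_subset by blast
  have sub: "Vset F \<subseteq> corners c"
    using extreme_point_of_face[OF F] Vset_cell[of c] by (auto simp: Vset_def)
  have "(\<Sum>v\<in>Vset F. gfun v x) = (\<Sum>v\<in>corners c. gfun v x)"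
  proof (rule sum.mono_neutral_left[OF finite_corners sub], rule ballI)
    fix v assume v: "v \<in> corners c - Vset F"
    hence "v \<in> gridpts" using corners_grid[OF c] by blast
    hence "\<not> gfun v x > 0" using face_pos_in_Vset[OF c F x] v by blast
    then show "gfun v x = 0" using gfun_ge0[of v x] by linarith
  qed
  also have "\<dots> = 1" by (rule sum_cell[OF c xc])
  finally show ?thesis .
qed

lemma Vcov_grid: "S \<subseteq> fullidx \<Longrightarrow> Vcov (cell ` S) \<subseteq> gridpts"
  using corners_grid by (fastforce simp: Vcov_def Vset_cell)

lemma vif:
  assumes S: "S \<subseteq> fullidx"
  shows "vertex_interp_set (cell ` S) gfun"
proof -
  have A4: "gfun v x = 0" if F: "F \<in> Faces (cell ` S)" and x: "x \<in> F" and v: "v \<in> Vcov (cell ` S) - Vset F" for F x v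
  proof -
    obtain c where c: "c \<in> S" "F face_of cell c" using F by (auto simp: Faces_def)
    have "v \<in> gridpts" using v Vcov_grid[OF S] by blast
    hence "\<not> gfun v x > 0" using face_pos_in_Vset[OF _ c(2) x] c(1) S v by blast
    then show ?thesis using gfun_ge0[of v x] by linarith
  qed
  have A3: "(\<Sum>v\<in>Vset F. gfun v x) = 1" if F: "F \<in> Faces (cell ` S)" and x: "x \<in> F" for F x
  proof -
    obtain c where c: "c \<in> S" "F face_of cell c" using F by (auto simp: Faces_def)
    show ?thesis using face_sum[OF _ c(2) x] c(1) S by blast
  qed
  have A2: "gfun v v' = (if v = v' then 1 else 0)" if v: "v \<in> Vcov (cell ` S)" and v': "v' \<in> Vcov (cell ` S)" for v v'
  proof -
    obtain c where c: "c \<in> S" "v' \<in> Vset (cell c)" using v' by (auto simp: Vcov_def)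
    have F: "{v'} face_of cell c" using c(2) by (simp add: face_of_singleton Vset_def)
    have FF: "{v'} \<in> Faces (cell ` S)" using F c(1) by (auto simp: Faces_def)
    have VF: "Vset {v'} = {v'}" by (simp add: Vset_def)
    show ?thesis
    proof (cases "v = v'")
      case True then show ?thesis using A3[OF FF, of v'] VF by simp
    next
      case False then show ?thesis using A4[OF FF, of v' v] VF v by simp
    qed
  qed
  show ?thesis unfolding vertex_interp_set_def
  proof (intro conjI)
    show "\<forall>v\<in>Vcov (cell ` S). \<forall>x\<in>\<Union>(cell ` S). 0 \<le> gfun v x" using gfun_ge0 by blast
    show "\<forall>v\<in>Vcov (cell ` S). \<forall>v'\<in>Vcov (cell ` S). gfun v v' = (if v = v' then 1 else 0)"
      using A2 by blast
    show "\<forall>F\<in>Faces (cell ` S). \<forall>x\<in>F. (\<Sum>v\<in>Vset F. gfun v x) = 1" using A3 by blast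
    show "\<forall>F\<in>Faces (cell ` S). \<forall>x\<in>F. \<forall>v\<in>Vcov (cell ` S) - Vset F. gfun v x = 0"
      using A4 by blast
  qed
qed

end

context grid begin

definition idx0 :: "('m \<Rightarrow> int) set" where
  "idx0 = {c. \<forall>i. 0 \<le> c i \<and> c i < int (n i)}"

lemma idx0_sub: "idx0 \<subseteq> fullidx"
proof
  fix c assume "c \<in> idx0"
  then have h: "\<And>i. 0 \<le> c i" "\<And>i. c i < int (n i)" by (auto simp: idx0_def)
  show "c \<in> fullidx" unfolding fullidx_def
  proof (intro CollectI allI conjI)
    fix i
    show "-1 \<le> c i" using h(1)[of i] by linarith
    show "c i \<le> int (n i)" using h(2)[of i] by linarith
  qed
qed

lemma Iv_bounded: "0 \<le> c \<Longrightarrow> c < int (n i) \<Longrightarrow> Iv i c = {K i c .. K i (c+1)}"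
  by (auto simp: Iv_def)

lemma Ints_i_eq: "Ints_i n kl b i = Iv i ` {0..<int (n i)}"
proof (intro equalityI subsetI)
  fix I assume "I \<in> Ints_i n kl b i"
  then obtain j where j: "j < n i" "I = {knot kl b i j .. knot kl b i (Suc j)}" by (auto simp: Ints_i_def)
  hence "I = Iv i (int j)" by (simp add: Iv_bounded knot_K add.commute)
  then show "I \<in> Iv i ` {0..<int (n i)}" using j by auto
next
  fix I assume "I \<in> Iv i ` {0..<int (n i)}"
  then obtain c where c: "0 \<le> c" "c < int (n i)" "I = Iv i c" by auto
  define j where "j = nat c"
  have "I = {knot kl b i j .. knot kl b i (Suc j)}" using c by (simp add: Iv_bounded knot_K j_def add.commute)
  then show "I \<in> Ints_i n kl b i" using c by (auto simp: Ints_i_def j_def)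
qed

lemma Ints_bar_i_eq: "Ints_bar_i n kl b i = Iv i ` {-1..int (n i)}"
proof -
  have m1: "Iv i (-1) = {..knot kl b i 0}" using n1[of i] by (auto simp: Iv_def knot_K)
  have nn: "Iv i (int (n i)) = {knot kl b i (n i)..}" using n1[of i] by (auto simp: Iv_def knot_K)
  have "{-1..int (n i)} = insert (-1) (insert (int (n i)) {0..<int (n i)})" by auto
  then show ?thesis unfolding Ints_bar_i_def Ints_i_eq using m1 nn by auto
qed

lemma prod_cells_eq: "prod_cells (\<lambda>i. Iv i ` A i) = cell ` {c. \<forall>i. c i \<in> A i}"
proof (intro equalityI subsetI)
  fix C assume "C \<in> prod_cells (\<lambda>i. Iv i ` A i)"
  then obtain I where I: "\<forall>i. I i \<in> Iv i ` A i" "C = {x. \<forall>i. x$i \<in> I i}" by (auto simp: prod_cells_def)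
  from I(1) have "\<forall>i. \<exists>c. c \<in> A i \<and> I i = Iv i c" by blast
  then obtain c where c: "\<And>i. c i \<in> A i" "\<And>i. I i = Iv i (c i)" by metis
  have "C = cell c" using I(2) c(2) by (simp add: cell_def prodset_def)
  then show "C \<in> cell ` {c. \<forall>i. c i \<in> A i}" using c(1) by blast
next
  fix C assume "C \<in> cell ` {c. \<forall>i. c i \<in> A i}"
  then obtain c where c: "\<forall>i. c i \<in> A i" "C = cell c" by blast
  then show "C \<in> prod_cells (\<lambda>i. Iv i ` A i)"
    unfolding prod_cells_def cell_def prodset_def
    by (intro CollectI exI[of _ "\<lambda>i. Iv i (c i)"]) auto
qed

lemma cover0_eq: "cover0 n kl b = cell ` idx0"
proof -
  have "cover0 n kl b = prod_cells (\<lambda>i. Iv i ` {0..<int (n i)})"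
    unfolding cover0_def using Ints_i_eq by presburger
  also have "\<dots> = cell ` idx0" unfolding prod_cells_eq idx0_def by auto
  finally show ?thesis .
qed

lemma cover_full_eq: "cover_full n kl b = cell ` fullidx"
proof -
  have "cover_full n kl b = prod_cells (\<lambda>i. Iv i ` {-1..int (n i)})"
    unfolding cover_full_def using Ints_bar_i_eq by presburger
  also have "\<dots> = cell ` fullidx" unfolding prod_cells_eq fullidx_def by auto
  finally show ?thesis .
qed

lemma finite_fullidx: "finite fullidx"
proof -
  have "fullidx = PiE UNIV (\<lambda>i. {-1..int (n i)})"
    by (auto simp: fullidx_def PiE_UNIV_domain Pi_def)
  then show ?thesis by (simp add: finite_PiE)
qed

lemma polyhedron_cell: "polyhedron (cell c)"
proof -
  have eq: "cell c = \<Inter> (range (\<lambda>i. {x. 0 \<le> c i \<longrightarrow> K i (c i) \<le> x$i} \<inter> {x. c i < int (n i) \<longrightarrow> x$i \<le> K i (c i + 1)}))"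
    by (auto simp: cell_def prodset_def Iv_def)
  have p1: "polyhedron {x::real^'m. 0 \<le> c i \<longrightarrow> K i (c i) \<le> x$i}" for i
  proof (cases "0 \<le> c i")
    case True
    have "{x::real^'m. 0 \<le> c i \<longrightarrow> K i (c i) \<le> x$i} = {x. axis i 1 \<bullet> x \<ge> K i (c i)}"
      using True by (auto simp: inner_axis')
    then show ?thesis by (simp add: polyhedron_halfspace_ge)
  qed simp
  have p2: "polyhedron {x::real^'m. c i < int (n i) \<longrightarrow> x$i \<le> K i (c i + 1)}" for i
  proof (cases "c i < int (n i)")
    case True
    have "{x::real^'m. c i < int (n i) \<longrightarrow> x$i \<le> K i (c i + 1)} = {x. axis i 1 \<bullet> x \<le> K i (c i + 1)}"
      using True by (auto simp: inner_axis')
    then show ?thesis by (simp add: polyhedron_halfspace_le)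
  qed simp
  show ?thesis unfolding eq using p1 p2 by (intro polyhedron_Inter) auto
qed

lemma Iv_int_single:
  assumes cc: "c < c'" "-1 \<le> c" "c' \<le> int (n i)" and ne: "Iv i c \<inter> Iv i c' \<noteq> {}"
  shows "Iv i c \<inter> Iv i c' = {K i (c+1)} \<and> K i (c+1) \<in> endpts i c \<and> K i (c+1) \<in> endpts i c'"
proof -
  obtain t where t: "t \<in> Iv i c" "t \<in> Iv i c'" using ne by blast
  have cn: "c < int (n i)" "0 \<le> c'" using cc by linarith+
  have "K i c' \<le> K i (c+1)" using t cn by (auto simp: Iv_def)
  hence c': "c' = c + 1" using cc by (simp add: K_le_iff)
  have "Iv i c \<inter> Iv i c' = {K i (c+1)}"
    using c' cn by (auto simp: Iv_def K_le_iff)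
  moreover have "K i (c+1) \<in> endpts i c" "K i (c+1) \<in> endpts i c'"
    using c' cn by (auto simp: endpts_def)
  ultimately show ?thesis by blast
qed

lemma Iv_int_face:
  assumes c: "-1 \<le> c" "c \<le> int (n i)" and c': "-1 \<le> c'" "c' \<le> int (n i)"
    and ne: "Iv i c \<inter> Iv i c' \<noteq> {}"
  shows "(Iv i c \<inter> Iv i c') face_of Iv i c"
proof -
  consider "c = c'" | "c < c'" | "c' < c" by linarith
  then show ?thesis
  proof cases
    case 1 then show ?thesis by (simp add: face_of_refl convex_Iv)
  next
    case 2
    then show ?thesis using Iv_int_single[OF 2 c(1) c'(2) ne]
      by (simp add: face_of_singleton ext_Iv)
  next
    case 3
    have ne': "Iv i c' \<inter> Iv i c \<noteq> {}" using ne by blast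
    have "Iv i c' \<inter> Iv i c = {K i (c'+1)} \<and> K i (c'+1) \<in> endpts i c" using Iv_int_single[OF 3 c'(1) c(2) ne'] by blast
    then show ?thesis by (simp add: face_of_singleton ext_Iv Int_commute)
  qed
qed

lemma cell_int_face:
  assumes c1: "c1 \<in> fullidx" and c2: "c2 \<in> fullidx" and ne: "cell c1 \<inter> cell c2 \<noteq> {}"
  shows "(cell c1 \<inter> cell c2) face_of cell c1"
proof -
  obtain x where x: "x \<in> cell c1" "x \<in> cell c2" using ne by blast
  have eq: "cell c1 \<inter> cell c2 = prodset (\<lambda>i. Iv i (c1 i) \<inter> Iv i (c2 i))"
    by (auto simp: cell_def prodset_def)
  have "(Iv i (c1 i) \<inter> Iv i (c2 i)) face_of Iv i (c1 i)" for i
  proof -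
    have "x$i \<in> Iv i (c1 i) \<inter> Iv i (c2 i)" using x by (auto simp: cell_def prodset_def)
    then show ?thesis using c1 c2 by (intro Iv_int_face) (auto simp: fullidx_def)
  qed
  then show ?thesis unfolding eq by (simp add: cell_def face_prodset_prod)
qed

lemma polycover:
  assumes S: "S \<subseteq> fullidx" and Y: "Y \<subseteq> \<Union>(cell ` S)"
  shows "polyhedral_cover (cell ` S) Y"
  unfolding polyhedral_cover_def
proof (intro conjI ballI impI)
  show "finite (cell ` S)" using S finite_fullidx by (meson finite_imageI finite_subset)
  fix C assume "C \<in> cell ` S"
  then obtain c where c: "c \<in> S" "C = cell c" by blast
  show "polyhedron C" using c by (simp add: polyhedron_cell)
  show "Vset C \<noteq> {}" using c S corners_ne by (auto simp: Vset_cell)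
next
  show "Y \<subseteq> \<Union>(cell ` S)" by fact
next
  fix C1 C2 assume C: "C1 \<in> cell ` S" "C2 \<in> cell ` S" and ne: "C1 \<inter> C2 \<noteq> {}"
  obtain c1 c2 where c: "c1 \<in> S" "c2 \<in> S" "C1 = cell c1" "C2 = cell c2" using C by blast
  show "(C1 \<inter> C2) face_of C1" using cell_int_face c S ne by blast
  show "(C1 \<inter> C2) face_of C2" using cell_int_face[of c2 c1] c S ne by (auto simp: Int_commute)
qed

lemma cover_1d_full: "\<exists>c. -1 \<le> c \<and> c \<le> int (n i) \<and> t \<in> Iv i c"
proof -
  define y where "y = (t - kl i) / b i"
  show ?thesis
  proof (cases "y < 0")
    case True
    then show ?thesis using n1[of i] by (intro exI[of _ "-1"]) (auto simp: Iv_def t_le_K y_def)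
  next
    case False
    show ?thesis
    proof (cases "y \<ge> of_int (int (n i))")
      case True
      then show ?thesis by (intro exI[of _ "int (n i)"]) (auto simp: Iv_def K_le_t y_def)
    next
      case False2: False
      define c where "c = \<lfloor>y\<rfloor>"
      have "of_int c \<le> y" "y < of_int c + 1" by (auto simp: c_def)
      moreover have "0 \<le> c" "c < int (n i)" using False False2 by (auto simp: c_def floor_less_iff)
      ultimately show ?thesis
        by (intro exI[of _ c]) (auto simp: Iv_def K_le_t t_le_K y_def)
    qed
  qed
qed

lemma cover_1d_0:
  assumes "knot kl b i 0 \<le> t" "t \<le> knot kl b i (n i)"
  shows "\<exists>c. 0 \<le> c \<and> c < int (n i) \<and> t \<in> Iv i c"
proof -
  define y where "y = (t - kl i) / b i"
  have y: "0 \<le> y" "y \<le> of_int (int (n i))" using assms by (auto simp: knot_K K_le_t t_le_K y_def)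
  show ?thesis
  proof (cases "y = of_int (int (n i))")
    case True
    then show ?thesis using n1[of i]
      by (intro exI[of _ "int (n i) - 1"]) (auto simp: Iv_def K_le_t t_le_K y_def)
  next
    case False
    define c where "c = \<lfloor>y\<rfloor>"
    have "of_int c \<le> y" "y < of_int c + 1" by (auto simp: c_def)
    moreover have "0 \<le> c" "c < int (n i)" using False y by (auto simp: c_def floor_less_iff)
    ultimately show ?thesis
      by (intro exI[of _ c]) (auto simp: Iv_def K_le_t t_le_K y_def)
  qed
qed

lemma union_full: "\<Union>(cell ` fullidx) = UNIV"
proof -
  have "x \<in> \<Union>(cell ` fullidx)" for x :: "real^'m"
  proof -
    have "\<forall>i. \<exists>c. -1 \<le> c \<and> c \<le> int (n i) \<and> x$i \<in> Iv i c" using cover_1d_full by blast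
    then obtain c where "\<And>i. -1 \<le> c i \<and> c i \<le> int (n i) \<and> x$i \<in> Iv i (c i)" by metis
    then show ?thesis by (auto simp: fullidx_def cell_def prodset_def)
  qed
  then show ?thesis by blast
qed

lemma union_0: "{x. \<forall>i. x $ i \<in> {knot kl b i 0 .. knot kl b i (n i)}} \<subseteq> \<Union>(cell ` idx0)"
proof
  fix x :: "real^'m" assume "x \<in> {x. \<forall>i. x $ i \<in> {knot kl b i 0 .. knot kl b i (n i)}}"
  hence "\<forall>i. \<exists>c. 0 \<le> c \<and> c < int (n i) \<and> x$i \<in> Iv i c" using cover_1d_0 by auto
  then obtain c where "\<And>i. 0 \<le> c i \<and> c i < int (n i) \<and> x$i \<in> Iv i (c i)" by metis
  then show "x \<in> \<Union>(cell ` idx0)" by (auto simp: idx0_def cell_def prodset_def)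
qed

end

lemma sum_lessThan_add_split:
  fixes f :: "nat \<Rightarrow> 'a::comm_monoid_add" and k1 k2 :: nat
  shows "(\<Sum>j<k1 + k2. f j) = (\<Sum>j<k1. f j) + (\<Sum>j<k2. f (k1 + j))"
  by (induction k2) (auto simp: add.assoc)

lemma span1_const: "(\<lambda>x. c) \<in> span1 G"
  unfolding span1_def by (intro CollectI exI[of _ c] exI[of _ 0]) auto

lemma span1_G: "f \<in> G \<Longrightarrow> f \<in> span1 G"
  unfolding span1_def
  by (intro CollectI exI[of _ 0] exI[of _ 1] exI[of _ "\<lambda>_. 1"] exI[of _ "\<lambda>_. f"]) auto

lemma span1_add:
  assumes "f \<in> span1 G" "g \<in> span1 G"
  shows "(\<lambda>x. f x + g x) \<in> span1 G"
proof -
  have "\<exists>y1 (k1::nat) c1 g1. (\<forall>j<k1. g1 j \<in> G) \<and> f = (\<lambda>x. y1 + (\<Sum>j<k1. c1 j * g1 j x))"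
    using assms(1) by (simp add: span1_def)
  then obtain y1 k1 c1 g1 where 1: "\<forall>j<(k1::nat). g1 j \<in> G" "f = (\<lambda>x. y1 + (\<Sum>j<k1. c1 j * g1 j x))"
    by blast
  have "\<exists>y2 (k2::nat) c2 g2. (\<forall>j<k2. g2 j \<in> G) \<and> g = (\<lambda>x. y2 + (\<Sum>j<k2. c2 j * g2 j x))"
    using assms(2) by (simp add: span1_def)
  then obtain y2 k2 c2 g2 where 2: "\<forall>j<(k2::nat). g2 j \<in> G" "g = (\<lambda>x. y2 + (\<Sum>j<k2. c2 j * g2 j x))"
    by blast
  define c where "c j = (if j < k1 then c1 j else c2 (j - k1))" for j
  define gs where "gs j = (if j < k1 then g1 j else g2 (j - k1))" for j
  have G: "\<forall>j<k1 + k2. gs j \<in> G" using 1 2 by (auto simp: gs_def)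
  have s: "(\<Sum>j<k1 + k2. c j * gs j x) = (\<Sum>j<k1. c1 j * g1 j x) + (\<Sum>j<k2. c2 j * g2 j x)" for x
    unfolding sum_lessThan_add_split by (simp add: c_def gs_def)
  have "(\<lambda>x. f x + g x) = (\<lambda>x. (y1 + y2) + (\<Sum>j<k1 + k2. c j * gs j x))"
    unfolding s 1 2 by (rule ext) linarith
  then show ?thesis unfolding span1_def using G by blast
qed

lemma span1_scale:
  assumes "f \<in> span1 G" shows "(\<lambda>x. a * f x) \<in> span1 G"
proof -
  have "\<exists>y1 (k1::nat) c1 g1. (\<forall>j<k1. g1 j \<in> G) \<and> f = (\<lambda>x. y1 + (\<Sum>j<k1. c1 j * g1 j x))"
    using assms(1) by (simp add: span1_def)
  then obtain y1 k1 c1 g1 where 1: "\<forall>j<(k1::nat). g1 j \<in> G" "f = (\<lambda>x. y1 + (\<Sum>j<k1. c1 j * g1 j x))"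
    by blast
  have "(\<lambda>x. a * f x) = (\<lambda>x. a * y1 + (\<Sum>j<k1. (a * c1 j) * g1 j x))"
  proof (rule ext)
    fix x
    have "a * (\<Sum>j<k1. c1 j * g1 j x) = (\<Sum>j<k1. (a * c1 j) * g1 j x)"
      by (simp add: sum_distrib_left mult.assoc)
    then show "a * f x = a * y1 + (\<Sum>j<k1. (a * c1 j) * g1 j x)" unfolding 1 by (simp add: distrib_left)
  qed
  then show ?thesis unfolding span1_def using 1(1)
    by (intro CollectI exI[of _ "a * y1"] exI[of _ k1] exI[of _ "\<lambda>j. a * c1 j"] exI[of _ g1]) simp
qed

lemma span1_diff:
  assumes "f \<in> span1 G" "g \<in> span1 G" shows "(\<lambda>x. f x - g x) \<in> span1 G"
  using span1_add[OF assms(1) span1_scale[OF assms(2), of "-1"]] by simp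

lemma span1_sum:
  assumes "finite I" "\<And>i. i \<in> I \<Longrightarrow> f i \<in> span1 G"
  shows "(\<lambda>x. \<Sum>i\<in>I. f i x) \<in> span1 G"
  using assms
proof (induction I rule: finite_induct)
  case empty then show ?case using span1_const[of 0] by simp
next
  case (insert i I)
  then show ?case using span1_add[of "f i" G "\<lambda>x. \<Sum>i\<in>I. f i x"] by simp
qed

lemma span1_mono: "G \<subseteq> G' \<Longrightarrow> span1 G \<subseteq> span1 G'"
  unfolding span1_def by blast

lemma span1_eqI: "f \<in> span1 G \<Longrightarrow> (\<And>x. g x = f x) \<Longrightarrow> g \<in> span1 G"
proof -
  assume "f \<in> span1 G" "\<And>x. g x = f x"
  moreover have "g = f" using \<open>\<And>x. g x = f x\<close> by auto
  ultimately show ?thesis by simp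
qed

lemma mn_max: "finite K \<Longrightarrow> max s (mn Q K f) = mn (max s Q) K (\<lambda>i. max s (f i))"
proof (induction K arbitrary: Q rule: finite_induct)
  case empty then show ?case by simp
next
  case (insert k K)
  have "max s (min Q (f k)) = min (max s Q) (max s (f k))" by (auto simp: max_def min_def)
  then show ?case using insert by (simp add: mn_insert)
qed

lemma mn_min: "finite K \<Longrightarrow> min s (mn Q K f) = mn (min s Q) K f"
proof (induction K arbitrary: Q rule: finite_induct)
  case empty then show ?case by simp
next
  case (insert k K)
  then show ?case by (simp add: mn_insert min.assoc)
qed

context grid begin

definition atv :: "real^'m \<Rightarrow> 'm \<times> nat \<Rightarrow> real" where
  "atv x ik = (x $ fst ik - knot kl b (fst ik) (snd ik - 1)) / b (fst ik)"

definition Uf :: "('m \<times> nat) set \<Rightarrow> real^'m \<Rightarrow> real" where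
  "Uf A x = (if A = {} then 0 else hcl (Max (atv x ` A)))"

definition valid :: "('m \<times> nat) set \<Rightarrow> bool" where
  "valid A \<longleftrightarrow> finite A \<and> (\<forall>ik\<in>A. 1 \<le> snd ik \<and> snd ik \<le> n (fst ik))"

lemma hcl_le1: "hcl t \<le> 1" and hcl_ge0: "0 \<le> hcl t" by (auto simp: hcl_def)
lemma Uf_le1: "Uf A x \<le> 1" and Uf_ge0: "0 \<le> Uf A x" by (auto simp: Uf_def hcl_def)

lemma hcl_max: "max (hcl s) (hcl t) = hcl (max s t)"
  by (auto simp: hcl_def max_def min_def)

lemma Uf_Un: "finite A \<Longrightarrow> finite B \<Longrightarrow> max (Uf A x) (Uf B x) = Uf (A \<union> B) x"
proof -
  assume f: "finite A" "finite B"
  show ?thesis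
  proof (cases "A = {}")
    case True then show ?thesis using Uf_ge0[of B x] by (simp add: Uf_def)
  next
    case False
    show ?thesis
    proof (cases "B = {}")
      case True then show ?thesis using Uf_ge0[of A x] by (simp add: Uf_def)
    next
      case False2: False
      then show ?thesis using False f by (simp add: Uf_def hcl_max Max_Un image_Un)
    qed
  qed
qed

lemma knot_mono: "j \<le> k \<Longrightarrow> knot kl b i j \<le> knot kl b i k"
  using bpos[of i] by (simp add: knot_def mult_right_mono)

lemma phi_G0:
  assumes fin: "finite A" and ne: "A \<noteq> {}" and val: "\<And>ik. ik \<in> A \<Longrightarrow> snd ik \<le> n (fst ik)"
  shows "(\<lambda>x. max 0 (Max ((\<lambda>ik. (x $ fst ik - knot kl b (fst ik) (snd ik)) / b (fst ik)) ` A))) \<in> G0 n kl b"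
proof -
  define L where "L = fst ` A"
  define j where "j i = Min (snd ` {ik\<in>A. fst ik = i})" for i
  have Lne: "L \<noteq> {}" using ne by (simp add: L_def)
  have finL: "finite L" using fin by (simp add: L_def)
  have jin: "(i, j i) \<in> A" if "i \<in> L" for i
  proof -
    have "finite (snd ` {ik\<in>A. fst ik = i})" "snd ` {ik\<in>A. fst ik = i} \<noteq> {}"
      using fin that by (auto simp: L_def)
    then have "j i \<in> snd ` {ik\<in>A. fst ik = i}" unfolding j_def by (rule Min_in)
    then show ?thesis by auto
  qed
  have jle: "j (fst ik) \<le> snd ik" if "ik \<in> A" for ik
    unfolding j_def using fin that by (intro Min_le) auto
  have jn: "\<forall>i\<in>L. j i \<le> n i" using jin val by fastforce
  define z where "z x ik = (x $ fst ik - knot kl b (fst ik) (snd ik)) / b (fst ik)" for x ik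
  have eq: "max 0 (Max ((\<lambda>i. max 0 ((x $ i - knot kl b i (j i)) / b i)) ` L)) = max 0 (Max (z x ` A))" for x
  proof (rule antisym)
    show "max 0 (Max ((\<lambda>i. max 0 ((x $ i - knot kl b i (j i)) / b i)) ` L)) \<le> max 0 (Max (z x ` A))"
    proof -
      have "max 0 ((x $ i - knot kl b i (j i)) / b i) \<le> max 0 (Max (z x ` A))" if "i \<in> L" for i
      proof -
        have "z x (i, j i) \<le> Max (z x ` A)" using fin jin[OF that] by (intro Max_ge) auto
        then show ?thesis by (simp add: z_def)
      qed
      then show ?thesis using finL Lne by (simp add: Max_le_iff)
    qed
    show "max 0 (Max (z x ` A)) \<le> max 0 (Max ((\<lambda>i. max 0 ((x $ i - knot kl b i (j i)) / b i)) ` L))"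
    proof -
      have "z x ik \<le> Max ((\<lambda>i. max 0 ((x $ i - knot kl b i (j i)) / b i)) ` L)" if "ik \<in> A" for ik
      proof -
        have fL: "fst ik \<in> L" using that by (simp add: L_def)
        have "knot kl b (fst ik) (j (fst ik)) \<le> knot kl b (fst ik) (snd ik)" using jle[OF that] by (rule knot_mono)
        hence "z x ik \<le> (x $ fst ik - knot kl b (fst ik) (j (fst ik))) / b (fst ik)"
          unfolding z_def using bpos[of "fst ik"] by (intro divide_right_mono) auto
        also have "\<dots> \<le> max 0 ((x $ fst ik - knot kl b (fst ik) (j (fst ik))) / b (fst ik))" by simp
        also have "\<dots> \<le> Max ((\<lambda>i. max 0 ((x $ i - knot kl b i (j i)) / b i)) ` L)"
          using finL fL by (intro Max_ge) auto
        finally show ?thesis .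
      qed
      then have "Max (z x ` A) \<le> Max ((\<lambda>i. max 0 ((x $ i - knot kl b i (j i)) / b i)) ` L)"
        using fin ne by (simp add: Max_le_iff)
      then show ?thesis by simp
    qed
  qed
  have "(\<lambda>x. if L = {} then 0 else max 0 (Max ((\<lambda>i. max 0 ((x $ i - knot kl b i (j i)) / b i)) ` L))) \<in> G0 n kl b"
    unfolding G0_def using jn by blast
  moreover have "(\<lambda>x. if L = {} then 0 else max 0 (Max ((\<lambda>i. max 0 ((x $ i - knot kl b i (j i)) / b i)) ` L)))
      = (\<lambda>x. max 0 (Max ((\<lambda>ik. (x $ fst ik - knot kl b (fst ik) (snd ik)) / b (fst ik)) ` A)))"
    using Lne eq by (auto simp: z_def)
  ultimately show ?thesis by simp
qed

lemma Uf_span: assumes "valid A" shows "Uf A \<in> span1 (G0 n kl b)"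
proof (cases "A = {}")
  case True
  have "Uf A = (\<lambda>x. 0)" by (rule ext) (simp add: Uf_def True)
  then show ?thesis using span1_const[of 0] by simp
next
  case False
  have fin: "finite A" and v: "\<And>ik. ik \<in> A \<Longrightarrow> 1 \<le> snd ik \<and> snd ik \<le> n (fst ik)"
    using assms by (auto simp: valid_def)
  define A' where "A' = (\<lambda>ik. (fst ik, snd ik - 1)) ` A"
  have p1: "(\<lambda>x. max 0 (Max ((\<lambda>ik. (x $ fst ik - knot kl b (fst ik) (snd ik)) / b (fst ik)) ` A'))) \<in> G0 n kl b"
  proof (rule phi_G0)
    show "finite A'" using fin by (simp add: A'_def)
    show "A' \<noteq> {}" using False by (simp add: A'_def)
    fix ik assume "ik \<in> A'"
    then obtain ik0 where "ik0 \<in> A" "ik = (fst ik0, snd ik0 - 1)" by (auto simp: A'_def)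
    then show "snd ik \<le> n (fst ik)" using v[of ik0] by auto
  qed
  have p2: "(\<lambda>x. max 0 (Max ((\<lambda>ik. (x $ fst ik - knot kl b (fst ik) (snd ik)) / b (fst ik)) ` A))) \<in> G0 n kl b"
    using fin False v by (intro phi_G0) auto
  have e1: "Max ((\<lambda>ik. (x $ fst ik - knot kl b (fst ik) (snd ik)) / b (fst ik)) ` A') = Max (atv x ` A)" for x
    unfolding A'_def image_image atv_def by simp
  have e2: "Max ((\<lambda>ik. (x $ fst ik - knot kl b (fst ik) (snd ik)) / b (fst ik)) ` A) = Max (atv x ` A) - 1" for x
  proof -
    have "(\<lambda>ik. (x $ fst ik - knot kl b (fst ik) (snd ik)) / b (fst ik)) ` A = (\<lambda>ik. atv x ik + (-1)) ` A"
    proof (rule image_cong[OF refl])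
      fix ik assume "ik \<in> A"
      hence "1 \<le> snd ik" using v by blast
      hence "knot kl b (fst ik) (snd ik) = knot kl b (fst ik) (snd ik - 1) + b (fst ik)"
        by (simp add: knot_def of_nat_diff algebra_simps)
      then show "(x $ fst ik - knot kl b (fst ik) (snd ik)) / b (fst ik) = atv x ik + (-1)"
        using bpos[of "fst ik"] by (simp add: atv_def field_simps)
    qed
    also have "Max \<dots> = Max (atv x ` A) + (-1)" using fin False by (rule Max_add_commute)
    finally show ?thesis by simp
  qed
  have "hcl t = max 0 t - max 0 (t - 1)" for t by (simp add: hcl_def max_def min_def)
  hence "Uf A x = max 0 (Max ((\<lambda>ik. (x $ fst ik - knot kl b (fst ik) (snd ik)) / b (fst ik)) ` A'))
      - max 0 (Max ((\<lambda>ik. (x $ fst ik - knot kl b (fst ik) (snd ik)) / b (fst ik)) ` A))" for x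
    using False by (simp add: Uf_def e1 e2)
  then show ?thesis using span1_diff[OF span1_G[OF p1] span1_G[OF p2]] by (rule span1_eqI[rotated]) 
qed

end

context grid begin

lemma valid_Un: "valid A \<Longrightarrow> valid B \<Longrightarrow> valid (A \<union> B)"
  by (auto simp: valid_def)

lemma mn_span:
  assumes "finite J" "\<And>i. valid (B i)"
  shows "(\<lambda>x. mn 1 J (\<lambda>i. if i \<in> T then 1 else Uf (B i) x)) \<in> span1 (G0 n kl b)"
  using assms
proof (induction J arbitrary: B rule: finite_induct)
  case empty then show ?case using span1_const[of 1] by simp
next
  case (insert k J)
  show ?case
  proof (cases "k \<in> T")
    case True
    have "mn 1 (insert k J) (\<lambda>i. if i \<in> T then 1 else Uf (B i) x) = mn 1 J (\<lambda>i. if i \<in> T then 1 else Uf (B i) x)" for x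
      using insert.hyps True by (simp add: mn_insert)
    then show ?thesis using insert.IH[OF insert.prems] by simp
  next
    case False
    define B' where "B' i = B k \<union> B i" for i
    have vB': "valid (B' i)" for i using insert.prems by (simp add: B'_def valid_Un)
    have eq: "mn 1 (insert k J) (\<lambda>i. if i \<in> T then 1 else Uf (B i) x)
        = Uf (B k) x + mn 1 J (\<lambda>i. if i \<in> T then 1 else Uf (B i) x) - mn 1 J (\<lambda>i. if i \<in> T then 1 else Uf (B' i) x)" for x
    proof -
      let ?F = "\<lambda>i. if i \<in> T then 1 else Uf (B i) x"
      let ?u = "Uf (B k) x"
      have u1: "?u \<le> 1" by (rule Uf_le1)
      have "mn 1 (insert k J) ?F = mn (min 1 ?u) J ?F" using insert.hyps False by (simp add: mn_insert)
      also have "\<dots> = mn ?u J ?F" using u1 by (simp add: min_absorb2)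
      also have "\<dots> = min ?u (mn 1 J ?F)" using mn_min[OF insert.hyps(1), of ?u 1 ?F] u1 by (simp add: min_absorb1)
      finally have 1: "mn 1 (insert k J) ?F = min ?u (mn 1 J ?F)" .
      have "max ?u (mn 1 J ?F) = mn (max ?u 1) J (\<lambda>i. max ?u (?F i))" by (rule mn_max[OF insert.hyps(1)])
      also have "\<dots> = mn 1 J (\<lambda>i. if i \<in> T then 1 else Uf (B' i) x)"
      proof -
        have "max ?u (?F i) = (if i \<in> T then 1 else Uf (B' i) x)" for i
          using u1 insert.prems[of k] insert.prems[of i] by (auto simp: B'_def Uf_Un valid_def)
        then show ?thesis using u1 by (simp add: max_absorb2)
      qed
      finally have 2: "max ?u (mn 1 J ?F) = mn 1 J (\<lambda>i. if i \<in> T then 1 else Uf (B' i) x)" .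
      have "min ?u (mn 1 J ?F) = ?u + mn 1 J ?F - max ?u (mn 1 J ?F)" by (simp add: min_def max_def)
      then show ?thesis using 1 2 by simp
    qed
    have s1: "Uf (B k) \<in> span1 (G0 n kl b)" using insert.prems by (rule Uf_span)
    have s2: "(\<lambda>x. mn 1 J (\<lambda>i. if i \<in> T then 1 else Uf (B i) x)) \<in> span1 (G0 n kl b)"
      using insert.IH[OF insert.prems] .
    have s3: "(\<lambda>x. mn 1 J (\<lambda>i. if i \<in> T then 1 else Uf (B' i) x)) \<in> span1 (G0 n kl b)"
      using insert.IH[OF vB'] .
    show ?thesis using span1_diff[OF span1_add[OF s1 s2] s3] by (rule span1_eqI) (rule eq)
  qed
qed

lemma Uf_UN:
  assumes "finite I" "I \<noteq> {}" "\<And>i. finite (P i)"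
  shows "Max ((\<lambda>i. Uf (P i) x) ` I) = Uf (\<Union>i\<in>I. P i) x"
  using assms(1,2)
proof (induction I rule: finite_ne_induct)
  case (singleton i) then show ?case by simp
next
  case (insert i I)
  then show ?case using assms(3) by (simp add: Uf_Un)
qed

lemma gfun_span:
  assumes v: "v \<in> gridpts"
  shows "gfun v \<in> span1 (G0 n kl b)"
proof -
  have "\<forall>i. \<exists>a. 0 \<le> a \<and> a \<le> int (n i) \<and> v$i = K i a" using v by (simp add: gridpts_def)
  then obtain a where a: "\<And>i. 0 \<le> a i" "\<And>i. a i \<le> int (n i)" "\<And>i. v$i = K i (a i)" by metis
  define an where "an i = nat (a i)" for i
  have an: "an i \<le> n i" "v$i = knot kl b i (an i)" for i
    using a[of i] by (auto simp: an_def knot_K)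
  define T where "T = {i. an i = 0}"
  define PA where "PA i = (if an i = n i then {} else {(i, an i + 1)})" for i
  define Ps where "Ps = (\<Union>i. PA i)"
  define B where "B i = (if i \<in> T then Ps else {(i, an i)} \<union> Ps)" for i
  have finPA: "finite (PA i)" for i by (simp add: PA_def)
  have sn: "Suc (an i) \<le> n i" if "an i \<noteq> n i" for i using an(1)[of i] that by simp
  have vPs: "valid Ps" using sn by (auto simp: valid_def Ps_def PA_def)
  have vB: "valid (B i)" for i
    using vPs an(1)[of i] by (auto simp: B_def valid_def T_def)
  have kn: "knot kl b i (an i) = knot kl b i (an i - 1) + b i" if "an i \<noteq> 0" for i
    using that by (simp add: knot_def of_nat_diff algebra_simps)
  have q: "qf i (v$i) (x$i) = (if i \<in> T then 1 else Uf {(i, an i)} x)" for i x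
  proof (cases "i \<in> T")
    case True
    hence "v$i = K i 0" using an(2)[of i] by (simp add: T_def knot_K)
    then show ?thesis using True by (simp add: qf_def)
  next
    case False
    hence ne: "v$i \<noteq> K i 0" using an(2)[of i] by (simp add: T_def knot_K K_eq_iff)
    have "(x$i - v$i) / b i + 1 = atv x (i, an i)"
      using bpos[of i] kn[of i] False an(2)[of i] by (simp add: atv_def T_def field_simps)
    then show ?thesis using False ne by (simp add: qf_def Uf_def)
  qed
  have p: "pf i (v$i) (x$i) = Uf (PA i) x" for i x
  proof (cases "an i = n i")
    case True
    hence "v$i = K i (int (n i))" using an(2)[of i] by (simp add: knot_K)
    then show ?thesis using True by (simp add: pf_def PA_def Uf_def)
  next
    case False
    hence ne: "v$i \<noteq> K i (int (n i))" using an(2)[of i] by (simp add: knot_K K_eq_iff)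
    have "(x$i - v$i) / b i = atv x (i, an i + 1)" using an(2)[of i] by (simp add: atv_def)
    then show ?thesis using False ne by (simp add: pf_def PA_def Uf_def)
  qed
  have eq: "gfun v x = mn 1 UNIV (\<lambda>i. if i \<in> T then 1 else Uf (B i) x) - Uf Ps x" for x
  proof -
    let ?q = "\<lambda>i. if i \<in> T then 1 else Uf {(i, an i)} x"
    have M: "Max (range (\<lambda>i. pf i (v$i) (x$i))) = Uf Ps x"
      unfolding p Ps_def using finPA by (intro Uf_UN) auto
    have Mn: "Min (range (\<lambda>i. qf i (v$i) (x$i))) = mn 1 UNIV ?q"
      unfolding q by (rule mn_UNIV[symmetric]) (simp add: Uf_le1)
    have "max (Uf Ps x) (mn 1 UNIV ?q) = mn (max (Uf Ps x) 1) UNIV (\<lambda>i. max (Uf Ps x) (?q i))"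
      by (rule mn_max) simp
    also have "\<dots> = mn 1 UNIV (\<lambda>i. if i \<in> T then 1 else Uf (B i) x)"
    proof -
      have "max (Uf Ps x) (?q i) = (if i \<in> T then 1 else Uf (B i) x)" for i
        using vPs Uf_le1[of Ps x] by (auto simp: B_def Uf_Un valid_def Un_commute)
      then show ?thesis using Uf_le1[of Ps x] by (simp add: max_absorb2)
    qed
    finally have X: "max (Uf Ps x) (mn 1 UNIV ?q) = mn 1 UNIV (\<lambda>i. if i \<in> T then 1 else Uf (B i) x)" .
    have "gfun v x = max 0 (mn 1 UNIV ?q - Uf Ps x)" unfolding gfun_def M Mn ..
    also have "\<dots> = max (Uf Ps x) (mn 1 UNIV ?q) - Uf Ps x" by (simp add: max_def)
    finally show ?thesis using X by simp
  qed
  have s1: "(\<lambda>x. mn 1 UNIV (\<lambda>i. if i \<in> T then 1 else Uf (B i) x)) \<in> span1 (G0 n kl b)"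
    using vB by (intro mn_span) auto
  show ?thesis using span1_diff[OF s1 Uf_span[OF vPs]] by (rule span1_eqI) (rule eq)
qed

end

lemma norm0: "is_norm N \<Longrightarrow> N 0 = 0"
  by (simp add: is_norm_def)
lemma norm_scale: "is_norm N \<Longrightarrow> N (c *\<^sub>R x) = \<bar>c\<bar> * N x"
  by (simp add: is_norm_def)
lemma norm_tri: "is_norm N \<Longrightarrow> N (x + y) \<le> N x + N y"
  by (simp add: is_norm_def)
lemma norm_nonneg: assumes "is_norm N" shows "0 \<le> N x"
proof -
  have "N (x + (-1) *\<^sub>R x) \<le> N x + N ((-1) *\<^sub>R x)" by (rule norm_tri[OF assms])
  hence "0 \<le> N x + N x" using norm0[OF assms] norm_scale[OF assms, of "-1" x] by simp
  thus ?thesis by simp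
qed

lemma norm_sum: assumes "is_norm N" "finite A" shows "N (\<Sum>k\<in>A. f k) \<le> (\<Sum>k\<in>A. N (f k))"
  using assms(2)
proof (induction A rule: finite_induct)
  case empty then show ?case using norm0[OF assms(1)] by simp
next
  case (insert a A)
  have "N (\<Sum>k\<in>insert a A. f k) = N (f a + (\<Sum>k\<in>A. f k))" using insert.hyps by simp
  also have "\<dots> \<le> N (f a) + N (\<Sum>k\<in>A. f k)" by (rule norm_tri[OF assms(1)])
  also have "\<dots> \<le> N (f a) + (\<Sum>k\<in>A. N (f k))" using insert.IH by simp
  finally show ?case using insert.hyps by simp
qed

lemma norm_bound_cart:
  fixes N :: "real^'m \<Rightarrow> real"
  assumes N: "is_norm N" and p: "p \<ge> 1"
  shows "N y powr p \<le> (\<Sum>k\<in>UNIV. N (axis k 1)) powr p * (\<Sum>k\<in>UNIV. \<bar>y$k\<bar> powr p)"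
proof -
  define S where "S = (\<Sum>k\<in>UNIV. N (axis k (1::real)))"
  define D where "D = Max (range (\<lambda>k. \<bar>y$k\<bar>))"
  have S0: "0 \<le> S" unfolding S_def using norm_nonneg[OF N] by (simp add: sum_nonneg)
  have Dk: "\<bar>y$k\<bar> \<le> D" for k by (simp add: D_def)
  obtain k0 where k0: "D = \<bar>y$k0\<bar>"
  proof -
    have "D \<in> range (\<lambda>k. \<bar>y$k\<bar>)" unfolding D_def by (rule Max_in) auto
    then show ?thesis using that by blast
  qed
  have D0: "0 \<le> D" using k0 by simp
  have e: "(\<Sum>k\<in>UNIV. y$k *\<^sub>R axis k 1) = y"
    using basis_expansion[of y] unfolding scalar_mult_eq_scaleR .
  have "N y \<le> (\<Sum>k\<in>UNIV. N (y$k *\<^sub>R axis k 1))"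
    using norm_sum[OF N finite_class.finite_UNIV, of "\<lambda>k. y$k *\<^sub>R axis k 1"] unfolding e .
  also have "\<dots> = (\<Sum>k\<in>UNIV. \<bar>y$k\<bar> * N (axis k 1))" by (simp add: norm_scale[OF N])
  also have "\<dots> \<le> (\<Sum>k\<in>UNIV. D * N (axis k 1))"
    using Dk norm_nonneg[OF N] by (intro sum_mono mult_right_mono) auto
  also have "\<dots> = D * S" by (simp add: S_def sum_distrib_left)
  finally have ny: "N y \<le> D * S" .
  have "N y powr p \<le> (D * S) powr p" using ny norm_nonneg[OF N] p by (intro powr_mono2) auto
  also have "\<dots> = D powr p * S powr p" using D0 S0 by (simp add: powr_mult)
  also have "\<dots> \<le> (\<Sum>k\<in>UNIV. \<bar>y$k\<bar> powr p) * S powr p"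
  proof -
    have "D powr p \<le> (\<Sum>k\<in>UNIV. \<bar>y$k\<bar> powr p)"
      unfolding k0 by (rule member_le_sum) auto
    then show ?thesis by (intro mult_right_mono) auto
  qed
  finally show ?thesis by (simp add: S_def mult.commute)
qed

context grid begin

lemma closed_cell: "closed (cell c)" by (rule polyhedron_imp_closed[OF polyhedron_cell])
lemma convex_cell: "convex (cell c)" by (rule polyhedron_imp_convex[OF polyhedron_cell])

lemma norm_axis_real: "norm (axis i (t::real) :: real^'m) = \<bar>t\<bar>"
proof -
  have "axis i t = t *\<^sub>R (axis i 1 :: real^'m)" by (simp add: vec_eq_iff axis_def)
  then show ?thesis by simp
qed

lemma Dset_sub:
  assumes c: "c \<in> fullidx" and F: "F face_of cell c"
  shows "Dset F \<subseteq> range (\<lambda>i. axis i (1::real)) \<union> range (\<lambda>i. axis i (-1))"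
proof
  fix z :: "real^'m" assume "z \<in> Dset F"
  then obtain x0 where z1: "norm z = 1" and H: "{x0 + t *\<^sub>R z | t. t \<ge> 0} face_of F"
    by (auto simp: Dset_def)
  have H': "{x0 + t *\<^sub>R z | t. t \<ge> 0} face_of prodset (\<lambda>i. Iv i (c i))"
    using face_of_trans[OF H F] by (simp add: cell_def)
  have conv: "\<And>i. convex ((\<lambda>i. Iv i (c i)) i)" by (simp add: convex_Iv)
  have "z \<noteq> 0" using z1 by auto
  then obtain i where zi: "z$i \<noteq> 0" by (auto simp: vec_eq_iff)
  have zk: "z$k = 0" if "k \<noteq> i" for k
  proof (rule ccontr)
    assume "z$k \<noteq> 0"
    then have "i = k" using halfline_face_axis[OF conv H' zi] by blast
    then show False using that by simp
  qed
  have ze: "z = axis i (z$i)" using zk by (auto simp: vec_eq_iff axis_def)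
  have "\<bar>z$i\<bar> = 1" using z1 ze norm_axis_real[of i "z$i"] by simp
  hence "z$i = 1 \<or> z$i = -1" by auto
  then show "z \<in> range (\<lambda>i. axis i (1::real)) \<union> range (\<lambda>i. axis i (-1))" using ze by auto
qed

lemma finite_Dset: "c \<in> fullidx \<Longrightarrow> F face_of cell c \<Longrightarrow> finite (Dset F)"
  using Dset_sub by (rule finite_subset) auto

lemma dir_in_Dset:
  assumes c: "c \<in> fullidx" and F: "F face_of cell c" and x: "x \<in> F"
    and d: "(d = 1 \<and> x$i > K i (int (n i))) \<or> (d = -1 \<and> x$i < K i 0)"
  shows "axis i d \<in> Dset F"
proof -
  have xc: "x \<in> cell c" using F x face_of_imp_subset by blast
  have xi: "x$i \<in> Iv i (c i)" using xc by (simp add: cell_def prodset_def)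
  have cr: "-1 \<le> c k" "c k \<le> int (n k)" for k using c by (auto simp: fullidx_def)
  define e0 where "e0 = (if d = 1 then K i (int (n i)) else K i 0)"
  have ci: "c i = (if d = 1 then int (n i) else -1)"
  proof (cases "d = 1")
    case True
    hence gt: "x$i > K i (int (n i))" using d by auto
    have "\<not> c i < int (n i)"
    proof
      assume lt: "c i < int (n i)"
      hence "x$i \<le> K i (c i + 1)" using xi by (simp add: Iv_def)
      moreover have "K i (c i + 1) \<le> K i (int (n i))" using lt by (simp add: K_le_iff)
      ultimately show False using gt by simp
    qed
    then show ?thesis using True cr[of i] by simp
  next
    case False
    hence lt: "x$i < K i 0" "d = -1" using d by auto
    have "\<not> 0 \<le> c i"
    proof
      assume ge: "0 \<le> c i"
      hence "K i (c i) \<le> x$i" using xi by (simp add: Iv_def)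
      moreover have "K i 0 \<le> K i (c i)" using ge by (simp add: K_le_iff)
      ultimately show False using lt by simp
    qed
    then show ?thesis using lt cr[of i] by simp
  qed
  have n1i: "int (n i) \<ge> 1" using n1[of i] by simp
  have epi: "endpts i (c i) = {e0}" using ci n1i by (auto simp: endpts_def e0_def)
  have xne: "x$i \<noteq> e0" using d by (auto simp: e0_def)
  have dn: "d \<noteq> 0" "\<bar>d\<bar> = 1" using d by auto
  define w where "w = (\<chi> k. if x$k \<in> endpts k (c k) then x$k else (SOME t. t \<in> endpts k (c k)))"
  have wend: "w$k \<in> endpts k (c k)" for k
    using endpts_ne[OF c, of k] by (auto simp: w_def intro: someI_ex)
  have wi: "w$i = e0" using wend[of i] epi by simp
  have wx: "w$k = x$k" if "x$k \<in> endpts k (c k)" for k using that by (simp add: w_def)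
  have wP: "w \<in> prodset (\<lambda>k. Iv k (c k))" using wend endpts_sub by (auto simp: prodset_def)
  have Iv_i: "Iv i (c i) = (if d = 1 then {s. K i (int (n i)) \<le> s} else {s. s \<le> K i 0})"
    using ci n1i by (auto simp: Iv_def)
  let ?H = "{w + t *\<^sub>R axis i d | t. t \<ge> 0}"
  have Hface: "?H face_of prodset (\<lambda>k. Iv k (c k))"
  proof (rule halfline_face[OF wP _ dn(1)])
    show "w$k extreme_point_of Iv k (c k)" if "k \<noteq> i" for k using wend[of k] by (simp add: ext_Iv)
    show "w$i + t * d \<in> Iv i (c i)" if "t \<ge> 0" for t
      using that d wi by (auto simp: Iv_i e0_def)
    show "\<exists>t\<ge>0. s = w$i + t * d" if "s \<in> Iv i (c i)" for s
    proof (cases "d = 1")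
      case True then show ?thesis using that wi by (intro exI[of _ "s - e0"]) (auto simp: Iv_i e0_def)
    next
      case False
      hence "d = -1" using d by auto
      then show ?thesis using that wi by (intro exI[of _ "e0 - s"]) (auto simp: Iv_i e0_def)
    qed
  qed
  have F': "F face_of prodset (\<lambda>k. Iv k (c k))" using F by (simp add: cell_def)
  have conv: "\<And>k. convex ((\<lambda>k. Iv k (c k)) k)" by (simp add: convex_Iv)
  have Hsub: "?H \<subseteq> F"
  proof
    fix y assume "y \<in> ?H"
    then obtain t where t: "t \<ge> 0" "y = w + t *\<^sub>R axis i d" by blast
    have yP: "y \<in> prodset (\<lambda>k. Iv k (c k))" using Hface face_of_imp_subset \<open>y \<in> ?H\<close> by blast
    have same: "y$k = x$k" if "x$k extreme_point_of Iv k (c k)" for k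
    proof -
      have xe: "x$k \<in> endpts k (c k)" using that by (simp add: ext_Iv)
      hence "k \<noteq> i" using xne epi by auto
      then show ?thesis using t wx[OF xe] by (simp add: axis_def)
    qed
    show "y \<in> F" by (rule face_prodset_move[OF F' conv x yP same])
  qed
  have HF: "?H face_of F"
    using face_of_subset[OF Hface Hsub] F face_of_imp_subset by (auto simp: cell_def)
  have wF: "w \<in> F" using Hsub by (auto intro!: exI[of _ 0])
  show ?thesis unfolding Dset_def using dn(2) wF HF by (auto simp: norm_axis_real)
qed

definition clampv :: "real^'m \<Rightarrow> real^'m" where
  "clampv x = (\<chi> k. min (max (x$k) (K k 0)) (K k (int (n k))))"

lemma K0n_le: "K k 0 \<le> K k (int (n k))" by (simp add: K_le_iff)

lemma endpts_range:
  assumes "c \<in> fullidx" "t \<in> endpts k (c k)" shows "K k 0 \<le> t \<and> t \<le> K k (int (n k))"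
proof -
  have "-1 \<le> c k" "c k \<le> int (n k)" using assms(1) by (auto simp: fullidx_def)
  then show ?thesis using assms(2) by (auto simp: endpts_def K_le_iff split: if_splits)
qed

lemma clamp_hull:
  assumes c: "c \<in> fullidx" and F: "F face_of cell c" and x: "x \<in> F"
  shows "clampv x \<in> convex hull (Vset F)"
proof -
  have xc: "x \<in> cell c" using F x face_of_imp_subset by blast
  have cr: "-1 \<le> c k" "c k \<le> int (n k)" for k using c by (auto simp: fullidx_def)
  let ?z = "clampv x"
  define Box where "Box = cbox (\<chi> k. K k 0) (\<chi> k. K k (int (n k)) :: real^'m)"
  have zc: "?z \<in> cell c" unfolding cell_def prodset_def
  proof (intro CollectI allI)
    fix k
    have xk: "x$k \<in> Iv k (c k)" using xc by (simp add: cell_def prodset_def)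
    consider "c k = -1" | "c k = int (n k)" | "0 \<le> c k \<and> c k < int (n k)" using cr[of k] by linarith
    then show "?z$k \<in> Iv k (c k)"
    proof cases
      case 1 then show ?thesis using xk K0n_le[of k] n1[of k] by (auto simp: clampv_def Iv_def)
    next
      case 2 then show ?thesis using xk K0n_le[of k] by (auto simp: clampv_def Iv_def)
    next
      case 3
      hence "K k 0 \<le> K k (c k)" "K k (c k + 1) \<le> K k (int (n k))" by (auto simp: K_le_iff)
      then show ?thesis using 3 xk by (auto simp: clampv_def Iv_def)
    qed
  qed
  have F': "F face_of prodset (\<lambda>k. Iv k (c k))" using F by (simp add: cell_def)
  have conv: "\<And>k. convex ((\<lambda>k. Iv k (c k)) k)" by (simp add: convex_Iv)
  have zF: "?z \<in> F"
  proof (rule face_prodset_move[OF F' conv x])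
    show "?z \<in> prodset (\<lambda>k. Iv k (c k))" using zc by (simp add: cell_def)
    fix k assume "x$k extreme_point_of Iv k (c k)"
    hence "x$k \<in> endpts k (c k)" by (simp add: ext_Iv)
    then show "?z$k = x$k" using endpts_range[OF c] by (auto simp: clampv_def)
  qed
  have zB: "?z \<in> Box" using K0n_le by (auto simp: Box_def mem_box_cart clampv_def)
  have CB: "cell c \<inter> Box = prodset (\<lambda>k. Iv k (c k) \<inter> {K k 0 .. K k (int (n k))})"
    by (auto simp: Box_def mem_box_cart cell_def prodset_def)
  have PF: "prodset (\<lambda>k. Iv k (c k) \<inter> {K k 0 .. K k (int (n k))}) face_of prodset (\<lambda>k. Iv k (c k))"
  proof (rule face_prodset_prod)
    fix k
    consider "c k = -1" | "c k = int (n k)" | "0 \<le> c k \<and> c k < int (n k)" using cr[of k] by linarith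
    then show "(Iv k (c k) \<inter> {K k 0 .. K k (int (n k))}) face_of Iv k (c k)"
    proof cases
      case 1
      hence "Iv k (c k) \<inter> {K k 0 .. K k (int (n k))} = {K k 0}" using K0n_le[of k] n1[of k] by (auto simp: Iv_def)
      moreover have "K k 0 \<in> endpts k (c k)" using 1 n1[of k] by (simp add: endpts_def)
      ultimately show ?thesis by (simp add: face_of_singleton ext_Iv)
    next
      case 2
      hence "Iv k (c k) \<inter> {K k 0 .. K k (int (n k))} = {K k (int (n k))}" using K0n_le[of k] by (auto simp: Iv_def)
      moreover have "K k (int (n k)) \<in> endpts k (c k)" using 2 by (simp add: endpts_def)
      ultimately show ?thesis by (simp add: face_of_singleton ext_Iv)
    next
      case 3
      hence "K k 0 \<le> K k (c k)" "K k (c k + 1) \<le> K k (int (n k))" by (auto simp: K_le_iff)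
      hence "Iv k (c k) \<inter> {K k 0 .. K k (int (n k))} = Iv k (c k)" using 3 by (auto simp: Iv_def)
      then show ?thesis by (simp add: face_of_refl convex_Iv)
    qed
  qed
  have CBface: "(cell c \<inter> Box) face_of cell c" using PF unfolding CB by (simp add: cell_def)
  define G where "G = F \<inter> Box"
  have GF: "G = F \<inter> (cell c \<inter> Box)" using F face_of_imp_subset by (auto simp: G_def)
  have Gface: "G face_of cell c" unfolding GF by (rule face_of_Int[OF F CBface])
  have Fclosed: "closed F" by (rule face_of_imp_closed[OF convex_cell closed_cell F])
  have Gcomp: "compact G" unfolding G_def Box_def using Fclosed by (intro closed_Int_compact) auto
  have Gconv: "convex G" unfolding G_def Box_def using face_of_imp_convex[OF F] by (intro convex_Int) auto
  have zG: "?z \<in> G" using zF zB by (simp add: G_def)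
  have "G = convex hull {e. e extreme_point_of G}" by (rule Krein_Milman_Minkowski[OF Gcomp Gconv])
  moreover have "{e. e extreme_point_of G} \<subseteq> Vset F"
  proof
    fix e assume "e \<in> {e. e extreme_point_of G}"
    hence "e extreme_point_of cell c" "e \<in> G" using extreme_point_of_face[OF Gface] by auto
    then show "e \<in> Vset F" using extreme_point_of_face[OF F] by (auto simp: Vset_def G_def)
  qed
  ultimately show ?thesis using zG hull_mono by blast
qed

end

context grid begin

definition Af :: "'m \<Rightarrow> real^'m \<Rightarrow> real" where "Af k x = max 0 (x$k - knot kl b k (n k))"
definition Bf :: "'m \<Rightarrow> real^'m \<Rightarrow> real" where "Bf k x = max 0 (knot kl b k 0 - x$k)"

definition gbf :: "(real^'m \<Rightarrow> real) \<Rightarrow> real \<Rightarrow> real^'m \<Rightarrow> real^'m \<Rightarrow> real" where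
  "gbf N p u x = (\<Sum>k\<in>UNIV. N (axis k 1)) powr p *
     (\<Sum>k\<in>UNIV. (if u = axis k 1 then Af k x powr p else 0) + (if u = axis k (-1) then Bf k x powr p else 0))"

lemma gbf_nonneg: "is_norm N \<Longrightarrow> 0 \<le> gbf N p u x"
  unfolding gbf_def by (intro mult_nonneg_nonneg sum_nonneg) auto

lemma diff_pow:
  assumes p: "p \<ge> 1"
  shows "\<bar>(x - clampv x)$k\<bar> powr p = Af k x powr p + Bf k x powr p"
proof -
  have kk: "knot kl b k (n k) = K k (int (n k))" "knot kl b k 0 = K k 0" by (simp_all add: knot_K)
  have le: "K k 0 \<le> K k (int (n k))" by (rule K0n_le)
  consider "x$k > K k (int (n k))" | "x$k < K k 0" | "K k 0 \<le> x$k \<and> x$k \<le> K k (int (n k))" by linarith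
  then show ?thesis
  proof cases
    case 1 then show ?thesis using le p by (simp add: clampv_def Af_def Bf_def kk)
  next
    case 2 then show ?thesis using le p by (simp add: clampv_def Af_def Bf_def kk)
  next
    case 3 then show ?thesis using le p by (simp add: clampv_def Af_def Bf_def kk)
  qed
qed

lemma radial:
  assumes N: "is_norm N" and p: "p \<ge> 1"
  shows "radial_set N p (cell ` fullidx) (gbf N p)"
  unfolding radial_set_def
proof (intro conjI ballI impI)
  fix u x show "0 \<le> gbf N p u x" by (rule gbf_nonneg[OF N])
next
  fix F x assume FF: "F \<in> Faces (cell ` fullidx)" and x: "x \<in> F"
  obtain c where c: "c \<in> fullidx" and F: "F face_of cell c" using FF by (auto simp: Faces_def)
  define S where "S = (\<Sum>k\<in>UNIV. N (axis k (1::real)))"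
  define Cv where "Cv = convex hull (Vset F)"
  define z where "z = clampv x"
  have zC: "z \<in> Cv" unfolding z_def Cv_def by (rule clamp_hull[OF c F x])
  have bdd: "bdd_below ((\<lambda>y. N (x - y)) ` Cv)" using norm_nonneg[OF N] by (intro bdd_belowI[of _ 0]) auto
  have inf1: "(INF y\<in>Cv. N (x - y)) \<le> N (x - z)" by (rule cINF_lower[OF bdd zC])
  have inf0: "0 \<le> (INF y\<in>Cv. N (x - y))"
    using zC norm_nonneg[OF N] by (intro cINF_greatest) auto
  have "(INF y\<in>Cv. N (x - y)) powr p \<le> N (x - z) powr p" using inf0 inf1 p by (intro powr_mono2) auto
  also have "\<dots> \<le> S powr p * (\<Sum>k\<in>UNIV. \<bar>(x - z)$k\<bar> powr p)"
    unfolding S_def by (rule norm_bound_cart[OF N p])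
  also have "\<dots> = S powr p * (\<Sum>k\<in>UNIV. Af k x powr p + Bf k x powr p)"
    unfolding z_def using diff_pow[OF p] by simp
  also have "\<dots> = (\<Sum>u\<in>Dset F. gbf N p u x)"
  proof -
    have finD: "finite (Dset F)" by (rule finite_Dset[OF c F])
    have A: "(if axis k 1 \<in> Dset F then Af k x powr p else 0) = Af k x powr p" for k
    proof (cases "x$k > K k (int (n k))")
      case True then have "axis k 1 \<in> Dset F" using dir_in_Dset[OF c F x, of 1 k] by simp
      then show ?thesis by simp
    next
      case False then have "Af k x = 0" by (simp add: Af_def knot_K)
      then show ?thesis using p by simp
    qed
    have B: "(if axis k (-1) \<in> Dset F then Bf k x powr p else 0) = Bf k x powr p" for k
    proof (cases "x$k < K k 0")
      case True then have "axis k (-1) \<in> Dset F" using dir_in_Dset[OF c F x, of "-1" k] by simp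
      then show ?thesis by simp
    next
      case False then have "Bf k x = 0" by (simp add: Bf_def knot_K)
      then show ?thesis using p by simp
    qed
    have "(\<Sum>u\<in>Dset F. gbf N p u x) = S powr p * (\<Sum>u\<in>Dset F. \<Sum>k\<in>UNIV.
         (if u = axis k 1 then Af k x powr p else 0) + (if u = axis k (-1) then Bf k x powr p else 0))"
      by (simp add: gbf_def S_def sum_distrib_left)
    also have "(\<Sum>u\<in>Dset F. \<Sum>k\<in>UNIV.
         (if u = axis k 1 then Af k x powr p else 0) + (if u = axis k (-1) then Bf k x powr p else 0))
       = (\<Sum>k\<in>UNIV. \<Sum>u\<in>Dset F.
         (if u = axis k 1 then Af k x powr p else 0) + (if u = axis k (-1) then Bf k x powr p else 0))"
      by (rule sum.swap)
    also have "\<dots> = (\<Sum>k\<in>UNIV. (if axis k 1 \<in> Dset F then Af k x powr p else 0)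
                               + (if axis k (-1) \<in> Dset F then Bf k x powr p else 0))"
      by (simp add: sum.distrib finD)
    also have "\<dots> = (\<Sum>k\<in>UNIV. Af k x powr p + Bf k x powr p)" by (simp add: A B)
    finally show ?thesis by simp
  qed
  finally show "(INF y\<in>convex hull Vset F. N (x - y)) powr p \<le> (\<Sum>u\<in>Dset F. gbf N p u x)"
    unfolding Cv_def .
qed

lemma G0_single:
  assumes "j \<le> n k"
  shows "(\<lambda>x. max 0 ((x$k - knot kl b k j) / b k)) \<in> G0 n kl b"
proof -
  have "(\<lambda>x. if {k} = {} then 0 else max 0 (Max ((\<lambda>i. max 0 ((x $ i - knot kl b i ((\<lambda>_. j) i)) / b i)) ` {k}))) \<in> G0 n kl b"
    unfolding G0_def using assms
    by (intro CollectI exI[of _ "{k}"] exI[of _ "\<lambda>_. j"] conjI refl) auto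
  then show ?thesis by simp
qed

lemma G0_sub_Gp: "G0 n kl b \<subseteq> Gp n kl b p"
  by (auto simp: Gp_def G1_def Gpow_def)

lemma Af_span: "(\<lambda>x. Af k x powr p) \<in> span1 (Gp n kl b p)"
proof (cases "p = 1")
  case True
  have g: "(\<lambda>x. max 0 ((x$k - knot kl b k (n k)) / b k)) \<in> span1 (Gp n kl b p)"
    using G0_single[of "n k" k] G0_sub_Gp span1_G by blast
  have "Af k x powr p = b k * max 0 ((x$k - knot kl b k (n k)) / b k)" for x
    using True bpos[of k] by (auto simp: Af_def max_def field_simps)
  then show ?thesis using span1_scale[OF g, of "b k"] by (rule span1_eqI[rotated])
next
  case False
  have "(\<lambda>x. Af k x powr p) \<in> Gp n kl b p" using False by (auto simp: Gp_def Gpow_def Af_def)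
  then show ?thesis by (rule span1_G)
qed

lemma Bf_span: "(\<lambda>x. Bf k x powr p) \<in> span1 (Gp n kl b p)"
proof (cases "p = 1")
  case True
  have g: "(\<lambda>x. max 0 ((x$k - knot kl b k 0) / b k)) \<in> span1 (Gp n kl b p)"
    using G0_single[of 0 k] G0_sub_Gp span1_G by blast
  have xk: "(\<lambda>x. x$k) \<in> span1 (Gp n kl b p)" using True by (intro span1_G) (auto simp: Gp_def G1_def)
  have s: "(\<lambda>x. knot kl b k 0 + ((-1) * x$k + b k * max 0 ((x$k - knot kl b k 0) / b k))) \<in> span1 (Gp n kl b p)"
    by (intro span1_add span1_const span1_scale xk g)
  have "Bf k x powr p = knot kl b k 0 + ((-1) * x$k + b k * max 0 ((x$k - knot kl b k 0) / b k))" for x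
    using True bpos[of k] by (auto simp: Bf_def max_def field_simps)
  then show ?thesis using s by (rule span1_eqI[rotated])
next
  case False
  have "(\<lambda>x. Bf k x powr p) \<in> Gp n kl b p" using False by (auto simp: Gp_def Gpow_def Bf_def)
  then show ?thesis by (rule span1_G)
qed

lemma gbf_span: "gbf N p u \<in> span1 (Gp n kl b p)"
proof -
  have t: "(\<lambda>x. (if u = axis k 1 then Af k x powr p else 0) + (if u = axis k (-1) then Bf k x powr p else 0))
      \<in> span1 (Gp n kl b p)" for k
  proof -
    have a: "(\<lambda>x. if u = axis k 1 then Af k x powr p else 0) \<in> span1 (Gp n kl b p)"
      using Af_span span1_const[of 0] by (cases "u = axis k 1") auto
    have c: "(\<lambda>x. if u = axis k (-1) then Bf k x powr p else 0) \<in> span1 (Gp n kl b p)"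
      using Bf_span span1_const[of 0] by (cases "u = axis k (-1)") auto
    show ?thesis by (rule span1_add[OF a c])
  qed
  have "(\<lambda>x. \<Sum>k\<in>UNIV. (if u = axis k 1 then Af k x powr p else 0) + (if u = axis k (-1) then Bf k x powr p else 0))
      \<in> span1 (Gp n kl b p)"
    by (rule span1_sum) (use t in auto)
  then have "(\<lambda>x. (\<Sum>k\<in>UNIV. N (axis k 1)) powr p * (\<Sum>k\<in>UNIV. (if u = axis k 1 then Af k x powr p else 0) + (if u = axis k (-1) then Bf k x powr p else 0)))
      \<in> span1 (Gp n kl b p)" by (rule span1_scale)
  then show ?thesis unfolding gbf_def[abs_def] .
qed

end

theorem proposition3p13:
  fixes N :: "real^'m \<Rightarrow> real"
    and n :: "'m \<Rightarrow> nat" and b kl :: "'m \<Rightarrow> real"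
  assumes "is_norm N"
    and "\<And>i. n i \<ge> 1"
    and "\<And>i. b i > 0"
  shows "(\<forall>Y. Y \<subseteq> {x. \<forall>i. x $ i \<in> {knot kl b i 0 .. knot kl b i (n i)}} \<longrightarrow>
              polyhedral_cover (cover0 n kl b) Y)
         \<and> interp_function_set (G0 n kl b) (cover0 n kl b)
         \<and> (\<forall>Y. polyhedral_cover (cover_full n kl b) Y)
         \<and> (\<forall>p::real. p \<ge> 1 \<longrightarrow> p_interp_function_set N p (Gp n kl b p) (cover_full n kl b))"
proof -
  interpret grid n kl b using assms(2,3) by unfold_locales auto
  have P1: "\<forall>Y. Y \<subseteq> {x. \<forall>i. x $ i \<in> {knot kl b i 0 .. knot kl b i (n i)}} \<longrightarrow>
              polyhedral_cover (cover0 n kl b) Y"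
    unfolding cover0_eq using polycover[OF idx0_sub] union_0 by blast
  have P2: "interp_function_set (G0 n kl b) (cover0 n kl b)"
    unfolding interp_function_set_def cover0_eq
    using vif[OF idx0_sub] gfun_span Vcov_grid[OF idx0_sub] by blast
  have P3: "\<forall>Y. polyhedral_cover (cover_full n kl b) Y"
    unfolding cover_full_eq using polycover[OF order_refl] union_full by blast
  have P4: "p_interp_function_set N p (Gp n kl b p) (cover_full n kl b)" if p: "p \<ge> 1" for p
    unfolding p_interp_function_set_def cover_full_eq
  proof (intro conjI)
    show "\<exists>g. vertex_interp_set (cell ` fullidx) g \<and> (\<forall>v\<in>Vcov (cell ` fullidx). g v \<in> span1 (Gp n kl b p))"
      using vif[OF order_refl] gfun_span Vcov_grid[OF order_refl] span1_mono[OF G0_sub_Gp] by blast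
    show "\<exists>gb. radial_set N p (cell ` fullidx) gb \<and> (\<forall>u\<in>Dcov (cell ` fullidx). gb u \<in> span1 (Gp n kl b p))"
      using radial[OF assms(1) p] gbf_span by blast
  qed
  show ?thesis using P1 P2 P3 P4 by blast
qed

end
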